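(* Let $(\Omega,d)$ be a compact metric space and $F$ a $k$-iterated contraction system on $\Omega$ with contraction ratio $\theta\in(0,1)$ and attractor $\Omega$. Let $A,B:\Omega\to\mathbb{R}$ be Lipschitz potentials which are normalized with respect to $F$, and let $\mu_A,\mu_B$ be their Gibbs measures. Let $C>0$, $\lambda\in(0,1)$ be constants, depending only on $\theta,\operatorname{Lip}(A),\operatorname{diam}\Omega$, such that $W_1((\mathscr{L}_A^* )^n\mu,(\mathscr{L}_A^* )^n\nu)\le C\lambda^nW_1(\mu,\nu)$ for all $n$ and all Borel probability measures $\mu,\nu$ on $\Omega$. Then with $C_3=\frac{C}{1-\lambda}\operatorname{diam}\Omega$, \[W_1(\mu_A,\mu_B)\le C_3\|A-B\|_\infty,\] and for every Lipschitz $\varphi:\Omega\to\mathbb{R}$, \[\Big|\int\varphi\,d\mu_A-\int\varphi\,d\mu_B\Big|\le C_3\operatorname{Lip}(\varphi)\|A-B\|_\infty.\]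
   Context: A $k$-multiset is an unordered list of $k$ elements with repetitions allowed; sums over it count multiplicities. A $k$-iterated contraction system (ICS) on $\Omega$ with contraction ratio $\theta$ assigns to each $x\in\Omega$ a $k$-multiset $F(x)$ of elements of $\Omega$ such that for all $x,y$ there are enumerations $F(x)=\{x_1,\dots,x_k\}$, $F(y)=\{y_1,\dots,y_k\}$ with $d(x_i,y_i)\le\theta d(x,y)$; attractor $\Omega$ means $\Omega$ is the union of the underlying sets of the $F(x)$. A potential $A$ is normalized w.r.t. $F$ if $\sum_{y\in F(x)}e^{A(y)}=1$ for all $x$. The transfer operator is $\mathscr{L}_Af(x)=\sum_{y\in F(x)}e^{A(y)}f(y)$ and $\mathscr{L}_A^*$ its dual on measures ($\int\varphi\,d(\mathscr{L}_A^*\mu)=\int\mathscr{L}_A\varphi\,d\mu$); for normalized $A$ it maps probability measures to probability measures. The Gibbs measure $\mu_A$ is the unique Borel probability measure with $\mathscr{L}_A^*\mu_A=\mu_A$. $W_1$ is the 1-Wasserstein distance: $W_1(\mu,\nu)=\inf_\pi\int d(x,y)\,d\pi$ over couplings $\pi$ of $\mu,\nu$. *)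

theory Defs
  imports "HOL-Probability.Probability" "HOL-Library.Multiset"
begin

definition borel_prob :: "'a::metric_space set \<Rightarrow> 'a measure set" where
  "borel_prob \<Omega> = {M. prob_space M \<and> sets M = sets (restrict_space borel \<Omega>)}"

definition is_ICS :: "'a::metric_space set \<Rightarrow> nat \<Rightarrow> real \<Rightarrow> ('a \<Rightarrow> 'a multiset) \<Rightarrow> bool" where
  "is_ICS \<Omega> k \<theta> F \<longleftrightarrow>
     (\<forall>x\<in>\<Omega>. size (F x) = k \<and> set_mset (F x) \<subseteq> \<Omega>) \<and>
     (\<forall>x\<in>\<Omega>. \<forall>y\<in>\<Omega>. \<exists>xs ys. mset xs = F x \<and> mset ys = F y \<and>
        (\<forall>i<k. dist (xs ! i) (ys ! i) \<le> \<theta> * dist x y))"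

definition has_attractor :: "'a set \<Rightarrow> ('a \<Rightarrow> 'a multiset) \<Rightarrow> bool" where
  "has_attractor \<Omega> F \<longleftrightarrow> \<Omega> = (\<Union>x\<in>\<Omega>. set_mset (F x))"

definition normalized :: "'a set \<Rightarrow> ('a \<Rightarrow> 'a multiset) \<Rightarrow> ('a \<Rightarrow> real) \<Rightarrow> bool" where
  "normalized \<Omega> F A \<longleftrightarrow> (\<forall>x\<in>\<Omega>. sum_mset (image_mset (\<lambda>y. exp (A y)) (F x)) = 1)"

definition transfer_op :: "('a \<Rightarrow> 'a multiset) \<Rightarrow> ('a \<Rightarrow> real) \<Rightarrow> ('a \<Rightarrow> real) \<Rightarrow> 'a \<Rightarrow> real" where
  "transfer_op F A f x = sum_mset (image_mset (\<lambda>y. exp (A y) * f y) (F x))"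

definition transfer_dual :: "'a::metric_space set \<Rightarrow> ('a \<Rightarrow> 'a multiset) \<Rightarrow> ('a \<Rightarrow> real) \<Rightarrow> 'a measure \<Rightarrow> 'a measure" where
  "transfer_dual \<Omega> F A \<mu> = measure_of \<Omega> (sets (restrict_space borel \<Omega>))
     (\<lambda>S. \<integral>\<^sup>+ x. ennreal (transfer_op F A (indicator S) x) \<partial>\<mu>)"

definition couplings :: "'a::metric_space set \<Rightarrow> 'a measure \<Rightarrow> 'a measure \<Rightarrow> ('a \<times> 'a) measure set" where
  "couplings \<Omega> \<mu> \<nu> = {\<pi>. prob_space \<pi> \<and>
      sets \<pi> = sets (restrict_space borel \<Omega> \<Otimes>\<^sub>M restrict_space borel \<Omega>) \<and>
      distr \<pi> \<mu> fst = \<mu> \<and> distr \<pi> \<nu> snd = \<nu>}"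

definition W1 :: "'a::metric_space set \<Rightarrow> 'a measure \<Rightarrow> 'a measure \<Rightarrow> real" where
  "W1 \<Omega> \<mu> \<nu> = (INF \<pi>\<in>couplings \<Omega> \<mu> \<nu>. \<integral> p. dist (fst p) (snd p) \<partial>\<pi>)"

definition sup_norm :: "'a set \<Rightarrow> ('a \<Rightarrow> real) \<Rightarrow> real" where
  "sup_norm \<Omega> f = (SUP x\<in>\<Omega>. \<bar>f x\<bar>)"

definition Lip :: "'a::metric_space set \<Rightarrow> ('a \<Rightarrow> real) \<Rightarrow> real" where
  "Lip \<Omega> f = Inf {L. lipschitz_on L \<Omega> f}"

end

theory Submission
  imports Defs
begin



locale cms =
  fixes \<Omega> :: "'a::metric_space set"
  assumes cpt: "compact \<Omega>" and ne: "\<Omega> \<noteq> {}"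
begin

abbreviation "MO \<equiv> restrict_space borel \<Omega>"
abbreviation "MM \<equiv> MO \<Otimes>\<^sub>M MO"

lemma space_MO[simp]: "space MO = \<Omega>"
  by (simp add: space_restrict_space)

lemma space_MM[simp]: "space MM = \<Omega> \<times> \<Omega>"
  by (simp add: space_pair_measure)

lemma sets_MO_sub: "S \<in> sets MO \<Longrightarrow> S \<subseteq> \<Omega>"
  using sets.sets_into_space by fastforce

lemma bnd: "bounded \<Omega>" using cpt compact_imp_bounded by blast

lemma dist_le_diam: "x \<in> \<Omega> \<Longrightarrow> y \<in> \<Omega> \<Longrightarrow> dist x y \<le> diameter \<Omega>"
  using diameter_bounded_bound[OF bnd] by blast

lemma diam_nonneg: "0 \<le> diameter \<Omega>"
  using ne dist_le_diam[of x x for x] by (metis all_not_in_conv dist_self)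

lemma countable_dense:
  obtains D where "countable D" "D \<subseteq> \<Omega>" "\<And>x e. x \<in> \<Omega> \<Longrightarrow> 0 < e \<Longrightarrow> \<exists>d\<in>D. dist x d < e"
proof -
  have "\<forall>n::nat. \<exists>T. finite T \<and> T \<subseteq> \<Omega> \<and> \<Omega> \<subseteq> (\<Union>c\<in>T. ball c (inverse (real (Suc n))))"
  proof
    fix n :: nat
    have "\<Omega> \<subseteq> (\<Union>c\<in>\<Omega>. ball c (inverse (real (Suc n))))" by auto
    then obtain T where "T \<subseteq> \<Omega>" "finite T" "\<Omega> \<subseteq> (\<Union>c\<in>T. ball c (inverse (real (Suc n))))"
      using compactE_image[OF cpt, of \<Omega> "\<lambda>c. ball c (inverse (real (Suc n)))"] by auto
    then show "\<exists>T. finite T \<and> T \<subseteq> \<Omega> \<and> \<Omega> \<subseteq> (\<Union>c\<in>T. ball c (inverse (real (Suc n))))" by blast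
  qed
  then obtain T where T: "\<And>n. finite (T n) \<and> T n \<subseteq> \<Omega> \<and> \<Omega> \<subseteq> (\<Union>c\<in>T n. ball c (inverse (real (Suc n))))"
    by metis
  show ?thesis
  proof (rule that[of "\<Union>n. T n"])
    show "countable (\<Union>n. T n)" using T by (simp add: countable_finite)
    show "(\<Union>n. T n) \<subseteq> \<Omega>" using T by blast
    fix x e assume x: "x \<in> \<Omega>" and e: "(0::real) < e"
    obtain n where n: "inverse (real (Suc n)) < e" using reals_Archimedean[OF e] by auto
    then obtain c where "c \<in> T n" "x \<in> ball c (inverse (real (Suc n)))" using T x by blast
    then have "dist x c < e" using n by (simp add: dist_commute)
    then show "\<exists>d\<in>\<Union>n. T n. dist x d < e" using \<open>c \<in> T n\<close> by blast
  qed
qed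

lemma dist_meas: "(\<lambda>p. dist (fst p) (snd p)) \<in> borel_measurable MM"
proof -
  obtain D where D: "countable D" "D \<subseteq> \<Omega>" "\<And>x e. x \<in> \<Omega> \<Longrightarrow> 0 < e \<Longrightarrow> \<exists>d\<in>D. dist x d < e"
    using countable_dense by blast
  have Dne: "D \<noteq> {}" using ne D(3)[of _ 1] by fastforce
  have tri: "\<bar>dist x d - dist y d\<bar> \<le> dist x y" for x y d :: 'a
    using dist_triangle[of x d y] dist_triangle[of y d x] by (simp add: dist_commute)
  have eq: "dist x y = (SUP d\<in>D. \<bar>dist x d - dist y d\<bar>)" if xy: "x \<in> \<Omega>" "y \<in> \<Omega>" for x y
  proof (rule antisym)
    have bdd: "bdd_above ((\<lambda>d. \<bar>dist x d - dist y d\<bar>) ` D)"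
      using tri by (intro bdd_aboveI[of _ "dist x y"]) auto
    show "(SUP d\<in>D. \<bar>dist x d - dist y d\<bar>) \<le> dist x y"
      using Dne tri by (intro cSUP_least) auto
    show "dist x y \<le> (SUP d\<in>D. \<bar>dist x d - dist y d\<bar>)"
    proof (rule field_le_epsilon)
      fix e :: real assume e: "0 < e"
      obtain d where d: "d \<in> D" "dist x d < e/2" using D(3)[OF xy(1), of "e/2"] e by auto
      have "dist x y \<le> \<bar>dist x d - dist y d\<bar> + e"
        using dist_triangle[of x y d] d(2) by (simp add: dist_commute)
      also have "\<bar>dist x d - dist y d\<bar> \<le> (SUP d\<in>D. \<bar>dist x d - dist y d\<bar>)"
        using bdd d(1) by (rule cSUP_upper2) simp
      finally show "dist x y \<le> (SUP d\<in>D. \<bar>dist x d - dist y d\<bar>) + e" by simp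
    qed
  qed
  have m1: "(\<lambda>x. dist x d) \<in> borel_measurable MO" for d :: 'a
    by (intro borel_measurable_continuous_on_restrict continuous_intros)
  have m2: "(\<lambda>p. \<bar>dist (fst p) d - dist (snd p) d\<bar>) \<in> borel_measurable MM" for d
  proof -
    have "(\<lambda>p. dist (fst p) d) \<in> borel_measurable MM"
      by (rule measurable_compose[OF measurable_fst m1])
    moreover have "(\<lambda>p. dist (snd p) d) \<in> borel_measurable MM"
      by (rule measurable_compose[OF measurable_snd m1])
    ultimately show ?thesis by measurable
  qed
  have "(\<lambda>p. SUP d\<in>D. \<bar>dist (fst p) d - dist (snd p) d\<bar>) \<in> borel_measurable MM"
  proof (rule borel_measurable_cSUP)
    show "countable D" by fact
    show "\<And>d. d \<in> D \<Longrightarrow> (\<lambda>p. \<bar>dist (fst p) d - dist (snd p) d\<bar>) \<in> borel_measurable MM"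
      using m2 by blast
    fix p assume "p \<in> space MM"
    show "bdd_above ((\<lambda>d. \<bar>dist (fst p) d - dist (snd p) d\<bar>) ` D)"
      using tri by (intro bdd_aboveI[of _ "dist (fst p) (snd p)"]) auto
  qed
  then show ?thesis
    by (rule measurable_cong[THEN iffD1, rotated]) (auto simp: eq)
qed

definition cost :: "('a \<times> 'a) measure \<Rightarrow> real" where
  "cost \<pi> = (\<integral>p. dist (fst p) (snd p) \<partial>\<pi>)"

lemma W1_cost: "W1 \<Omega> \<mu> \<nu> = (INF \<pi>\<in>couplings \<Omega> \<mu> \<nu>. cost \<pi>)"
  by (simp add: W1_def cost_def)

lemma coupling_space: "\<pi> \<in> couplings \<Omega> \<mu> \<nu> \<Longrightarrow> space \<pi> = \<Omega> \<times> \<Omega>"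
  unfolding couplings_def by (auto dest!: sets_eq_imp_space_eq)

lemma coupling_sets: "\<pi> \<in> couplings \<Omega> \<mu> \<nu> \<Longrightarrow> sets \<pi> = sets MM"
  unfolding couplings_def by auto

lemma coupling_prob: "\<pi> \<in> couplings \<Omega> \<mu> \<nu> \<Longrightarrow> prob_space \<pi>"
  unfolding couplings_def by auto

lemma coupling_dist_meas: "\<pi> \<in> couplings \<Omega> \<mu> \<nu> \<Longrightarrow> (\<lambda>p. dist (fst p) (snd p)) \<in> borel_measurable \<pi>"
  using dist_meas measurable_cong_sets[OF coupling_sets refl] by blast

lemma coupling_integrable: "\<pi> \<in> couplings \<Omega> \<mu> \<nu> \<Longrightarrow> integrable \<pi> (\<lambda>p. dist (fst p) (snd p))"
proof -
  assume c: "\<pi> \<in> couplings \<Omega> \<mu> \<nu>"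
  interpret prob_space \<pi> using coupling_prob[OF c] .
  show ?thesis
    by (rule integrable_const_bound[where B="diameter \<Omega>"])
       (auto intro!: AE_I2 dist_le_diam simp: coupling_space[OF c] coupling_dist_meas[OF c])
qed

lemma cost_nonneg: "\<pi> \<in> couplings \<Omega> \<mu> \<nu> \<Longrightarrow> 0 \<le> cost \<pi>"
  unfolding cost_def by simp

lemma cost_le_diam: "\<pi> \<in> couplings \<Omega> \<mu> \<nu> \<Longrightarrow> cost \<pi> \<le> diameter \<Omega>"
proof -
  assume c: "\<pi> \<in> couplings \<Omega> \<mu> \<nu>"
  interpret prob_space \<pi> using coupling_prob[OF c] .
  show ?thesis unfolding cost_def
    by (rule integral_le_const[OF coupling_integrable[OF c]])
       (auto intro!: AE_I2 dist_le_diam simp: coupling_space[OF c])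
qed

lemma bp_prob: "\<mu> \<in> borel_prob \<Omega> \<Longrightarrow> prob_space \<mu>" by (simp add: borel_prob_def)
lemma bp_sets: "\<mu> \<in> borel_prob \<Omega> \<Longrightarrow> sets \<mu> = sets MO" by (simp add: borel_prob_def)
lemma bp_space: "\<mu> \<in> borel_prob \<Omega> \<Longrightarrow> space \<mu> = \<Omega>"
  using bp_sets[of \<mu>] sets_eq_imp_space_eq[of \<mu> MO] by simp

lemma product_coupling:
  assumes "\<mu> \<in> borel_prob \<Omega>" "\<nu> \<in> borel_prob \<Omega>"
  shows "\<mu> \<Otimes>\<^sub>M \<nu> \<in> couplings \<Omega> \<mu> \<nu>"
proof -
  have pm: "prob_space \<mu>" and pn: "prob_space \<nu>" using assms bp_prob by auto
  interpret N: prob_space \<nu> by fact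
  interpret U: prob_space \<mu> by fact
  have s: "sets (\<mu> \<Otimes>\<^sub>M \<nu>) = sets MM"
    using assms bp_sets by (intro sets_pair_measure_cong) auto
  have d2: "distr (\<mu> \<Otimes>\<^sub>M \<nu>) \<nu> snd = \<nu>"
  proof (rule measure_eqI)
    fix A assume A: "A \<in> sets (distr (\<mu> \<Otimes>\<^sub>M \<nu>) \<nu> snd)"
    then have A': "A \<in> sets \<nu>" by simp
    have "emeasure (distr (\<mu> \<Otimes>\<^sub>M \<nu>) \<nu> snd) A = emeasure (\<mu> \<Otimes>\<^sub>M \<nu>) (space \<mu> \<times> A)"
      using A' by (auto simp add: emeasure_distr space_pair_measure dest: sets.sets_into_space
          intro!: arg_cong2[where f=emeasure])
    also have "\<dots> = emeasure \<nu> A"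
      using A' by (simp add: N.emeasure_pair_measure_Times U.emeasure_space_1)
    finally show "emeasure (distr (\<mu> \<Otimes>\<^sub>M \<nu>) \<nu> snd) A = emeasure \<nu> A" .
  qed simp
  show ?thesis unfolding couplings_def
    using prob_space_pair[OF pm pn] s N.distr_pair_fst d2 by auto
qed

lemma couplings_ne: "\<mu> \<in> borel_prob \<Omega> \<Longrightarrow> \<nu> \<in> borel_prob \<Omega> \<Longrightarrow> couplings \<Omega> \<mu> \<nu> \<noteq> {}"
  using product_coupling by blast

lemma bdd_cost: "bdd_below (cost ` couplings \<Omega> \<mu> \<nu>)"
  using cost_nonneg by (intro bdd_belowI[of _ 0]) auto

lemma W1_le_cost: "\<pi> \<in> couplings \<Omega> \<mu> \<nu> \<Longrightarrow> W1 \<Omega> \<mu> \<nu> \<le> cost \<pi>"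
  unfolding W1_cost by (rule cINF_lower[OF bdd_cost])

lemma W1_nonneg: "\<mu> \<in> borel_prob \<Omega> \<Longrightarrow> \<nu> \<in> borel_prob \<Omega> \<Longrightarrow> 0 \<le> W1 \<Omega> \<mu> \<nu>"
  unfolding W1_cost using couplings_ne cost_nonneg by (intro cINF_greatest) auto

lemma W1_le_diam: "\<mu> \<in> borel_prob \<Omega> \<Longrightarrow> \<nu> \<in> borel_prob \<Omega> \<Longrightarrow> W1 \<Omega> \<mu> \<nu> \<le> diameter \<Omega>"
  using couplings_ne W1_le_cost cost_le_diam by (meson all_not_in_conv order_trans)

lemma W1_approx:
  assumes "\<mu> \<in> borel_prob \<Omega>" "\<nu> \<in> borel_prob \<Omega>" "0 < e"
  obtains \<pi> where "\<pi> \<in> couplings \<Omega> \<mu> \<nu>" "cost \<pi> < W1 \<Omega> \<mu> \<nu> + e"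
proof -
  have "(INF \<pi>\<in>couplings \<Omega> \<mu> \<nu>. cost \<pi>) < (INF \<pi>\<in>couplings \<Omega> \<mu> \<nu>. cost \<pi>) + e"
    using assms(3) by simp
  then obtain \<pi> where "\<pi> \<in> couplings \<Omega> \<mu> \<nu>" "cost \<pi> < (INF \<pi>\<in>couplings \<Omega> \<mu> \<nu>. cost \<pi>) + e"
    using cINF_less_iff[OF couplings_ne[OF assms(1,2)] bdd_cost] by blast
  then show ?thesis using that W1_cost by metis
qed

end



lemma nn_int_prod:
  assumes "prob_space M1" "prob_space M2"
    and a[measurable]: "a \<in> borel_measurable M1" and b[measurable]: "b \<in> borel_measurable M2"
  shows "(\<integral>\<^sup>+p. a (fst p) * b (snd p) \<partial>(M1 \<Otimes>\<^sub>M M2)) = (\<integral>\<^sup>+x. a x \<partial>M1) * (\<integral>\<^sup>+y. b y \<partial>M2)"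
proof -
  interpret M2: prob_space M2 by fact
  have m: "(\<lambda>p. a (fst p) * b (snd p)) \<in> borel_measurable (M1 \<Otimes>\<^sub>M M2)" by measurable
  have "(\<integral>\<^sup>+p. a (fst p) * b (snd p) \<partial>(M1 \<Otimes>\<^sub>M M2)) = (\<integral>\<^sup>+x. \<integral>\<^sup>+y. a x * b y \<partial>M2 \<partial>M1)"
    using M2.nn_integral_fst[OF m] by simp
  also have "\<dots> = (\<integral>\<^sup>+x. a x * (\<integral>\<^sup>+y. b y \<partial>M2) \<partial>M1)" by (simp add: nn_integral_cmult)
  also have "\<dots> = (\<integral>\<^sup>+x. a x \<partial>M1) * (\<integral>\<^sup>+y. b y \<partial>M2)" by (simp add: nn_integral_multc)
  finally show ?thesis .
qed

context cms begin

lemma sets_MO_int: "B \<in> sets borel \<Longrightarrow> \<Omega> \<inter> B \<in> sets MO"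
  by (auto simp: sets_restrict_space)

lemma partition:
  assumes "0 < \<delta>"
  obtains m :: nat and E :: "nat \<Rightarrow> 'a set" where "\<And>j. E j \<in> sets MO" "disjoint_family_on E {..<m}" "(\<Union>j<m. E j) = \<Omega>"
    "\<And>j x y. x \<in> E j \<Longrightarrow> y \<in> E j \<Longrightarrow> dist x y \<le> \<delta>"
proof -
  have "\<Omega> \<subseteq> (\<Union>c\<in>\<Omega>. ball c (\<delta>/2))" using assms by auto
  then obtain C where C: "C \<subseteq> \<Omega>" "finite C" "\<Omega> \<subseteq> (\<Union>c\<in>C. ball c (\<delta>/2))"
    using compactE_image[OF cpt, of \<Omega> "\<lambda>c. ball c (\<delta>/2)"] by auto
  obtain cs where cs: "set cs = C" using finite_list[OF C(2)] by blast
  define m where "m = length cs"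
  define E where "E j = (if j < m then \<Omega> \<inter> (ball (cs!j) (\<delta>/2) - (\<Union>i<j. ball (cs!i) (\<delta>/2))) else {})" for j
  show ?thesis
  proof (rule that[of E m])
    fix j
    have "ball (cs!j) (\<delta>/2) - (\<Union>i<j. ball (cs!i) (\<delta>/2)) \<in> sets borel"
      by (intro sets.Diff sets.finite_UN borel_open open_ball) auto
    then show "E j \<in> sets MO"
      unfolding E_def by (auto intro!: sets_MO_int)
  next
    show "disjoint_family_on E {..<m}"
      unfolding disjoint_family_on_def
    proof (intro ballI impI)
      fix i j assume "i \<in> {..<m}" "j \<in> {..<m}" "i \<noteq> j"
      then show "E i \<inter> E j = {}"
        by (cases "i < j") (auto simp: E_def)
    qed
  next
    show "(\<Union>j<m. E j) = \<Omega>"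
    proof
      show "(\<Union>j<m. E j) \<subseteq> \<Omega>" by (auto simp: E_def)
      show "\<Omega> \<subseteq> (\<Union>j<m. E j)"
      proof
        fix x assume x: "x \<in> \<Omega>"
        then obtain c where "c \<in> C" "x \<in> ball c (\<delta>/2)" using C(3) by blast
        then obtain j where j: "j < m" "x \<in> ball (cs!j) (\<delta>/2)" using cs by (auto simp: m_def in_set_conv_nth)
        define j0 where "j0 = (LEAST j. x \<in> ball (cs!j) (\<delta>/2))"
        have j0: "x \<in> ball (cs!j0) (\<delta>/2)" "j0 \<le> j" unfolding j0_def using j(2) by (auto intro: LeastI Least_le)
        have "\<forall>i<j0. x \<notin> ball (cs!i) (\<delta>/2)" unfolding j0_def using not_less_Least by blast
        then have "x \<in> E j0" using j0 j x by (auto simp: E_def)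
        then show "x \<in> (\<Union>j<m. E j)" using j0 j by auto
      qed
    qed
  next
    fix j x y assume "x \<in> E j" "y \<in> E j"
    then have "dist (cs!j) x < \<delta>/2" "dist (cs!j) y < \<delta>/2" by (auto simp: E_def split: if_splits)
    then show "dist x y \<le> \<delta>" using dist_triangle[of x y "cs!j"] by (simp add: dist_commute)
  qed
qed

lemma Omega_sets[measurable]: "\<Omega> \<in> sets MO"
  using sets.top[of MO] by simp

lemma coupling_meas_eq: "\<pi> \<in> couplings \<Omega> \<mu> \<nu> \<Longrightarrow> measurable \<pi> N = measurable MM N"
  by (rule measurable_cong_sets[OF coupling_sets refl])

lemma bp_meas_eq: "\<mu> \<in> borel_prob \<Omega> \<Longrightarrow> measurable N \<mu> = measurable N MO"
  by (rule measurable_cong_sets[OF refl bp_sets])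

lemma coupling_fst:
  assumes "\<pi> \<in> couplings \<Omega> \<mu> \<nu>" "\<mu> \<in> borel_prob \<Omega>" "S \<in> sets MO"
  shows "emeasure \<pi> (S \<times> \<Omega>) = emeasure \<mu> S"
proof -
  have meas: "fst \<in> \<pi> \<rightarrow>\<^sub>M \<mu>"
    unfolding coupling_meas_eq[OF assms(1)] bp_meas_eq[OF assms(2)] by measurable
  have "emeasure \<mu> S = emeasure (distr \<pi> \<mu> fst) S" using assms(1) by (simp add: couplings_def)
  also have "\<dots> = emeasure \<pi> (fst -` S \<inter> space \<pi>)"
    using meas assms(3) bp_sets[OF assms(2)] by (simp add: emeasure_distr)
  also have "fst -` S \<inter> space \<pi> = S \<times> \<Omega>"
    using sets_MO_sub[OF assms(3)] coupling_space[OF assms(1)] by auto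
  finally show ?thesis by simp
qed

lemma coupling_snd:
  assumes "\<pi> \<in> couplings \<Omega> \<mu> \<nu>" "\<nu> \<in> borel_prob \<Omega>" "S \<in> sets MO"
  shows "emeasure \<pi> (\<Omega> \<times> S) = emeasure \<nu> S"
proof -
  have meas: "snd \<in> \<pi> \<rightarrow>\<^sub>M \<nu>"
    unfolding coupling_meas_eq[OF assms(1)] bp_meas_eq[OF assms(2)] by measurable
  have "emeasure \<nu> S = emeasure (distr \<pi> \<nu> snd) S" using assms(1) by (simp add: couplings_def)
  also have "\<dots> = emeasure \<pi> (snd -` S \<inter> space \<pi>)"
    using meas assms(3) bp_sets[OF assms(2)] by (simp add: emeasure_distr)
  also have "snd -` S \<inter> space \<pi> = \<Omega> \<times> S"
    using sets_MO_sub[OF assms(3)] coupling_space[OF assms(1)] by auto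
  finally show ?thesis by simp
qed

end

locale glue = cms +
  fixes \<mu> \<nu> \<rho> :: "'a measure" and \<pi>1 \<pi>2 :: "('a \<times> 'a) measure" and m :: nat and E :: "nat \<Rightarrow> 'a set"
  assumes mu: "\<mu> \<in> borel_prob \<Omega>" and nu: "\<nu> \<in> borel_prob \<Omega>" and rho: "\<rho> \<in> borel_prob \<Omega>"
    and c1: "\<pi>1 \<in> couplings \<Omega> \<mu> \<nu>" and c2: "\<pi>2 \<in> couplings \<Omega> \<nu> \<rho>"
    and E_sets: "\<And>j. E j \<in> sets MO" and E_disj: "disjoint_family_on E {..<m}"
    and E_cover: "(\<Union>j<m. E j) = \<Omega>"
begin

lemma E_meas[measurable]: "E j \<in> sets MO" by (rule E_sets)

lemma E_sub: "E j \<subseteq> \<Omega>" using sets_MO_sub[OF E_sets] .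

lemma nu_em: "emeasure \<nu> A = ennreal (measure \<nu> A)"
proof -
  interpret prob_space \<nu> using bp_prob[OF nu] .
  show ?thesis by (rule emeasure_eq_measure)
qed

definition "cc j = ennreal (1 / measure \<nu> (E j))"
definition "ff p = (\<Sum>j<m. indicator (E j) (snd (fst p)) * indicator (E j) (fst (snd p)) * cc j)"
abbreviation "PP \<equiv> \<pi>1 \<Otimes>\<^sub>M \<pi>2"
abbreviation "proj \<equiv> (\<lambda>p::('a\<times>'a)\<times>('a\<times>'a). (fst (fst p), snd (snd p)))"
definition "GG = distr (density PP ff) MM proj"

lemma p1: "prob_space \<pi>1" using coupling_prob[OF c1] .
lemma p2: "prob_space \<pi>2" using coupling_prob[OF c2] .

lemma sets_PP: "sets PP = sets (MM \<Otimes>\<^sub>M MM)"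
  by (intro sets_pair_measure_cong coupling_sets[OF c1] coupling_sets[OF c2])

lemma space_PP: "space PP = (\<Omega> \<times> \<Omega>) \<times> (\<Omega> \<times> \<Omega>)"
  by (simp add: space_pair_measure coupling_space[OF c1] coupling_space[OF c2])

lemma meas_PP_eq: "measurable PP N = measurable (MM \<Otimes>\<^sub>M MM) N"
  by (rule measurable_cong_sets[OF sets_PP refl])

lemma ff_meas[measurable]: "ff \<in> borel_measurable PP"
  unfolding meas_PP_eq ff_def by measurable

lemma proj_meas: "proj \<in> PP \<rightarrow>\<^sub>M MM"
  unfolding meas_PP_eq by measurable

lemma proj_meas': "proj \<in> density PP ff \<rightarrow>\<^sub>M MM"
  using proj_meas by (simp add: measurable_cong_sets[OF sets_density refl])

lemma cc_nu: "emeasure \<nu> (E j) * cc j = (if measure \<nu> (E j) = 0 then 0 else 1)"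
proof -
  interpret prob_space \<nu> using bp_prob[OF nu] .
  show ?thesis
    by (simp add: cc_def emeasure_eq_measure ennreal_mult[symmetric])
qed

lemma KI:
  assumes g[measurable]: "g \<in> borel_measurable MM" and h[measurable]: "h \<in> borel_measurable MM"
  shows "(\<integral>\<^sup>+p. ff p * (g (fst p) * h (snd p)) \<partial>PP) =
    (\<Sum>j<m. (\<integral>\<^sup>+q. indicator (E j) (snd q) * g q \<partial>\<pi>1) * (\<integral>\<^sup>+q. indicator (E j) (fst q) * h q \<partial>\<pi>2) * cc j)"
proof -
  have "(\<integral>\<^sup>+p. ff p * (g (fst p) * h (snd p)) \<partial>PP) =
     (\<integral>\<^sup>+p. (\<Sum>j<m. ((indicator (E j) (snd (fst p)) * g (fst p)) * (indicator (E j) (fst (snd p)) * h (snd p))) * cc j) \<partial>PP)"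
    unfolding ff_def sum_distrib_right by (intro nn_integral_cong sum.cong refl) (simp add: ac_simps)
  also have "\<dots> = (\<Sum>j<m. \<integral>\<^sup>+p. ((indicator (E j) (snd (fst p)) * g (fst p)) * (indicator (E j) (fst (snd p)) * h (snd p))) * cc j \<partial>PP)"
    by (intro nn_integral_sum) (unfold meas_PP_eq, measurable)
  also have "\<dots> = (\<Sum>j<m. (\<integral>\<^sup>+p. (indicator (E j) (snd (fst p)) * g (fst p)) * (indicator (E j) (fst (snd p)) * h (snd p)) \<partial>PP) * cc j)"
    by (intro sum.cong refl nn_integral_multc) (unfold meas_PP_eq, measurable)
  also have "\<dots> = (\<Sum>j<m. (\<integral>\<^sup>+q. indicator (E j) (snd q) * g q \<partial>\<pi>1) * (\<integral>\<^sup>+q. indicator (E j) (fst q) * h q \<partial>\<pi>2) * cc j)"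
  proof (intro sum.cong refl)
    fix j
    have ma: "(\<lambda>q. indicator (E j) (snd q) * g q) \<in> borel_measurable \<pi>1"
      unfolding coupling_meas_eq[OF c1] by measurable
    have mb: "(\<lambda>q. indicator (E j) (fst q) * h q) \<in> borel_measurable \<pi>2"
      unfolding coupling_meas_eq[OF c2] by measurable
    show "(\<integral>\<^sup>+p. (indicator (E j) (snd (fst p)) * g (fst p)) * (indicator (E j) (fst (snd p)) * h (snd p)) \<partial>PP) * cc j =
      (\<integral>\<^sup>+q. indicator (E j) (snd q) * g q \<partial>\<pi>1) * (\<integral>\<^sup>+q. indicator (E j) (fst q) * h q \<partial>\<pi>2) * cc j"
      using nn_int_prod[OF p1 p2 ma mb] by simp
  qed
  finally show ?thesis .
qed

lemma GG_emeasure: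
  assumes X: "X \<in> sets MM"
  shows "emeasure GG X = (\<integral>\<^sup>+p. ff p * indicator X (proj p) \<partial>PP)"
proof -
  have "emeasure GG X = emeasure (density PP ff) (proj -` X \<inter> space (density PP ff))"
    unfolding GG_def using proj_meas' X by (simp add: emeasure_distr)
  also have "\<dots> = (\<integral>\<^sup>+p. ff p * indicator (proj -` X \<inter> space PP) p \<partial>PP)"
    using measurable_sets[OF proj_meas X] by (simp add: emeasure_density)
  also have "\<dots> = (\<integral>\<^sup>+p. ff p * indicator X (proj p) \<partial>PP)"
    by (intro nn_integral_cong) (simp add: indicator_def)
  finally show ?thesis .
qed

lemma sets_GG: "sets GG = sets MM" by (simp add: GG_def)
lemma space_GG: "space GG = \<Omega> \<times> \<Omega>" using sets_eq_imp_space_eq[OF sets_GG] by simp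

lemma G_fst:
  assumes S: "S \<in> sets MO"
  shows "emeasure GG (S \<times> \<Omega>) = emeasure \<mu> S"
proof -
  have SO: "S \<subseteq> \<Omega>" using sets_MO_sub[OF S] .
  have [measurable]: "S \<times> \<Omega> \<in> sets MM" using S by (intro pair_measureI) (auto simp: Omega_sets)
  have "emeasure GG (S \<times> \<Omega>) = (\<integral>\<^sup>+p. ff p * indicator (S \<times> \<Omega>) (proj p) \<partial>PP)"
    by (rule GG_emeasure) measurable
  also have "\<dots> = (\<integral>\<^sup>+p. ff p * (indicator (S \<times> \<Omega>) (fst p) * (\<lambda>_. 1) (snd p)) \<partial>PP)"
    by (intro nn_integral_cong) (auto simp: space_PP indicator_def)
  also have "\<dots> = (\<Sum>j<m. (\<integral>\<^sup>+q. indicator (E j) (snd q) * indicator (S \<times> \<Omega>) q \<partial>\<pi>1) *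
       (\<integral>\<^sup>+q. indicator (E j) (fst q) * 1 \<partial>\<pi>2) * cc j)"
    by (rule KI) measurable
  also have "\<dots> = (\<Sum>j<m. emeasure \<pi>1 (S \<times> E j))"
  proof (intro sum.cong refl)
    fix j
    have e1: "(\<integral>\<^sup>+q. indicator (E j) (snd q) * indicator (S \<times> \<Omega>) q \<partial>\<pi>1) = emeasure \<pi>1 (S \<times> E j)"
    proof -
      have "(\<integral>\<^sup>+q. indicator (E j) (snd q) * indicator (S \<times> \<Omega>) q \<partial>\<pi>1) = (\<integral>\<^sup>+q. indicator (S \<times> E j) q \<partial>\<pi>1)"
        using E_sub[of j] by (intro nn_integral_cong) (auto simp: indicator_def)
      also have "\<dots> = emeasure \<pi>1 (S \<times> E j)"
        using S by (simp add: coupling_sets[OF c1] pair_measureI Omega_sets)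
      finally show ?thesis .
    qed
    have e2: "(\<integral>\<^sup>+q. indicator (E j) (fst q) * 1 \<partial>\<pi>2) = emeasure \<nu> (E j)"
    proof -
      have "(\<integral>\<^sup>+q. indicator (E j) (fst q) * 1 \<partial>\<pi>2) = (\<integral>\<^sup>+q. indicator (E j \<times> \<Omega>) q \<partial>\<pi>2)"
        by (intro nn_integral_cong) (auto simp: indicator_def coupling_space[OF c2])
      also have "\<dots> = emeasure \<pi>2 (E j \<times> \<Omega>)"
        by (simp add: coupling_sets[OF c2] pair_measureI Omega_sets)
      also have "\<dots> = emeasure \<nu> (E j)" by (rule coupling_fst[OF c2 nu E_sets])
      finally show ?thesis .
    qed
    have z: "emeasure \<pi>1 (S \<times> E j) = 0" if "measure \<nu> (E j) = 0"
    proof -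
      have "emeasure \<pi>1 (S \<times> E j) \<le> emeasure \<pi>1 (\<Omega> \<times> E j)"
        using SO by (intro emeasure_mono) (auto simp: coupling_sets[OF c1] pair_measureI Omega_sets)
      also have "\<dots> = emeasure \<nu> (E j)" by (rule coupling_snd[OF c1 nu E_sets])
      also have "\<dots> = 0" using that nu_em by simp
      finally show ?thesis by simp
    qed
    show "(\<integral>\<^sup>+q. indicator (E j) (snd q) * indicator (S \<times> \<Omega>) q \<partial>\<pi>1) *
       (\<integral>\<^sup>+q. indicator (E j) (fst q) * 1 \<partial>\<pi>2) * cc j = emeasure \<pi>1 (S \<times> E j)"
      unfolding e1 e2 mult.assoc cc_nu using z by auto
  qed
  also have "\<dots> = emeasure \<pi>1 (\<Union>j<m. S \<times> E j)"
  proof (rule sum_emeasure)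
    show "(\<lambda>j. S \<times> E j) ` {..<m} \<subseteq> sets \<pi>1" using S by (auto simp: coupling_sets[OF c1] pair_measureI Omega_sets)
    show "disjoint_family_on (\<lambda>j. S \<times> E j) {..<m}"
      using E_disj by (auto simp: disjoint_family_on_def)
  qed simp
  also have "(\<Union>j<m. S \<times> E j) = S \<times> \<Omega>" using E_cover by blast
  also have "emeasure \<pi>1 (S \<times> \<Omega>) = emeasure \<mu> S" by (rule coupling_fst[OF c1 mu S])
  finally show ?thesis .
qed

lemma G_snd:
  assumes S: "S \<in> sets MO"
  shows "emeasure GG (\<Omega> \<times> S) = emeasure \<rho> S"
proof -
  have SO: "S \<subseteq> \<Omega>" using sets_MO_sub[OF S] .
  have [measurable]: "\<Omega> \<times> S \<in> sets MM" using S by (intro pair_measureI) (auto simp: Omega_sets)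
  have "emeasure GG (\<Omega> \<times> S) = (\<integral>\<^sup>+p. ff p * indicator (\<Omega> \<times> S) (proj p) \<partial>PP)"
    by (rule GG_emeasure) measurable
  also have "\<dots> = (\<integral>\<^sup>+p. ff p * ((\<lambda>_. 1) (fst p) * indicator (\<Omega> \<times> S) (snd p)) \<partial>PP)"
    by (intro nn_integral_cong) (auto simp: space_PP indicator_def)
  also have "\<dots> = (\<Sum>j<m. (\<integral>\<^sup>+q. indicator (E j) (snd q) * 1 \<partial>\<pi>1) *
       (\<integral>\<^sup>+q. indicator (E j) (fst q) * indicator (\<Omega> \<times> S) q \<partial>\<pi>2) * cc j)"
    by (rule KI) measurable
  also have "\<dots> = (\<Sum>j<m. emeasure \<pi>2 (E j \<times> S))"
  proof (intro sum.cong refl)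
    fix j
    have e1: "(\<integral>\<^sup>+q. indicator (E j) (fst q) * indicator (\<Omega> \<times> S) q \<partial>\<pi>2) = emeasure \<pi>2 (E j \<times> S)"
    proof -
      have "(\<integral>\<^sup>+q. indicator (E j) (fst q) * indicator (\<Omega> \<times> S) q \<partial>\<pi>2) = (\<integral>\<^sup>+q. indicator (E j \<times> S) q \<partial>\<pi>2)"
        using E_sub[of j] by (intro nn_integral_cong) (auto simp: indicator_def)
      also have "\<dots> = emeasure \<pi>2 (E j \<times> S)"
        using S by (simp add: coupling_sets[OF c2] pair_measureI Omega_sets)
      finally show ?thesis .
    qed
    have e2: "(\<integral>\<^sup>+q. indicator (E j) (snd q) * 1 \<partial>\<pi>1) = emeasure \<nu> (E j)"
    proof -
      have "(\<integral>\<^sup>+q. indicator (E j) (snd q) * 1 \<partial>\<pi>1) = (\<integral>\<^sup>+q. indicator (\<Omega> \<times> E j) q \<partial>\<pi>1)"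
        by (intro nn_integral_cong) (auto simp: indicator_def coupling_space[OF c1])
      also have "\<dots> = emeasure \<pi>1 (\<Omega> \<times> E j)"
        by (simp add: coupling_sets[OF c1] pair_measureI Omega_sets)
      also have "\<dots> = emeasure \<nu> (E j)" by (rule coupling_snd[OF c1 nu E_sets])
      finally show ?thesis .
    qed
    have z: "emeasure \<pi>2 (E j \<times> S) = 0" if "measure \<nu> (E j) = 0"
    proof -
      have "emeasure \<pi>2 (E j \<times> S) \<le> emeasure \<pi>2 (E j \<times> \<Omega>)"
        using SO by (intro emeasure_mono) (auto simp: coupling_sets[OF c2] pair_measureI Omega_sets)
      also have "\<dots> = emeasure \<nu> (E j)" by (rule coupling_fst[OF c2 nu E_sets])
      also have "\<dots> = 0" using that nu_em by simp
      finally show ?thesis by simp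
    qed
    show "(\<integral>\<^sup>+q. indicator (E j) (snd q) * 1 \<partial>\<pi>1) *
       (\<integral>\<^sup>+q. indicator (E j) (fst q) * indicator (\<Omega> \<times> S) q \<partial>\<pi>2) * cc j = emeasure \<pi>2 (E j \<times> S)"
    proof -
      have "emeasure \<nu> (E j) * emeasure \<pi>2 (E j \<times> S) * cc j = (emeasure \<nu> (E j) * cc j) * emeasure \<pi>2 (E j \<times> S)"
        by (simp add: ac_simps)
      then show ?thesis unfolding e1 e2 using z by (simp add: cc_nu)
    qed
  qed
  also have "\<dots> = emeasure \<pi>2 (\<Union>j<m. E j \<times> S)"
  proof (rule sum_emeasure)
    show "(\<lambda>j. E j \<times> S) ` {..<m} \<subseteq> sets \<pi>2" using S by (auto simp: coupling_sets[OF c2] pair_measureI Omega_sets)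
    show "disjoint_family_on (\<lambda>j. E j \<times> S) {..<m}"
      using E_disj by (auto simp: disjoint_family_on_def)
  qed simp
  also have "(\<Union>j<m. E j \<times> S) = \<Omega> \<times> S" using E_cover by blast
  also have "emeasure \<pi>2 (\<Omega> \<times> S) = emeasure \<rho> S" by (rule coupling_snd[OF c2 rho S])
  finally show ?thesis .
qed

lemma GG_coupling: "GG \<in> couplings \<Omega> \<mu> \<rho>"
proof -
  have pr: "prob_space GG"
  proof (rule prob_spaceI)
    have "emeasure GG (space GG) = emeasure \<mu> \<Omega>" using G_fst[OF Omega_sets] by (simp add: space_GG)
    also have "\<dots> = 1" using prob_space.emeasure_space_1[OF bp_prob[OF mu]] bp_space[OF mu] by simp
    finally show "emeasure GG (space GG) = 1" .
  qed
  have mf: "fst \<in> GG \<rightarrow>\<^sub>M \<mu>"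
    using measurable_cong_sets[OF sets_GG bp_sets[OF mu]] by simp
  have ms: "snd \<in> GG \<rightarrow>\<^sub>M \<rho>"
    using measurable_cong_sets[OF sets_GG bp_sets[OF rho]] by simp
  have d1: "distr GG \<mu> fst = \<mu>"
  proof (rule measure_eqI)
    fix S assume "S \<in> sets (distr GG \<mu> fst)"
    then have S: "S \<in> sets MO" using bp_sets[OF mu] by simp
    have "emeasure (distr GG \<mu> fst) S = emeasure GG (fst -` S \<inter> space GG)"
      using mf S bp_sets[OF mu] by (simp add: emeasure_distr)
    also have "fst -` S \<inter> space GG = S \<times> \<Omega>" using sets_MO_sub[OF S] by (auto simp: space_GG)
    finally show "emeasure (distr GG \<mu> fst) S = emeasure \<mu> S" using G_fst[OF S] by simp
  qed simp
  have d2: "distr GG \<rho> snd = \<rho>"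
  proof (rule measure_eqI)
    fix S assume "S \<in> sets (distr GG \<rho> snd)"
    then have S: "S \<in> sets MO" using bp_sets[OF rho] by simp
    have "emeasure (distr GG \<rho> snd) S = emeasure GG (snd -` S \<inter> space GG)"
      using ms S bp_sets[OF rho] by (simp add: emeasure_distr)
    also have "snd -` S \<inter> space GG = \<Omega> \<times> S" using sets_MO_sub[OF S] by (auto simp: space_GG)
    finally show "emeasure (distr GG \<rho> snd) S = emeasure \<rho> S" using G_snd[OF S] by simp
  qed simp
  show ?thesis unfolding couplings_def using pr sets_GG d1 d2 by auto
qed

end



context glue begin

lemma sum_ind_one: "y \<in> \<Omega> \<Longrightarrow> (\<Sum>j<m. indicator (E j) y) = (1::ennreal)"
proof -
  assume y: "y \<in> \<Omega>"
  have "indicator (\<Union>j\<in>{..<m}. E j) y = (\<Sum>j<m. indicator (E j) y :: ennreal)"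
    using E_disj by (intro indicator_UN_disjoint) auto
  then show ?thesis using y E_cover by simp
qed

lemma int_E_fst: "(\<integral>\<^sup>+q. indicator (E j) (fst q) * 1 \<partial>\<pi>2) = emeasure \<nu> (E j)"
proof -
  have "(\<integral>\<^sup>+q. indicator (E j) (fst q) * 1 \<partial>\<pi>2) = (\<integral>\<^sup>+q. indicator (E j \<times> \<Omega>) q \<partial>\<pi>2)"
    by (intro nn_integral_cong) (auto simp: indicator_def coupling_space[OF c2])
  also have "\<dots> = emeasure \<pi>2 (E j \<times> \<Omega>)"
    by (simp add: coupling_sets[OF c2] pair_measureI Omega_sets)
  also have "\<dots> = emeasure \<nu> (E j)" by (rule coupling_fst[OF c2 nu E_sets])
  finally show ?thesis .
qed

lemma int_E_snd: "(\<integral>\<^sup>+q. indicator (E j) (snd q) * 1 \<partial>\<pi>1) = emeasure \<nu> (E j)"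
proof -
  have "(\<integral>\<^sup>+q. indicator (E j) (snd q) * 1 \<partial>\<pi>1) = (\<integral>\<^sup>+q. indicator (\<Omega> \<times> E j) q \<partial>\<pi>1)"
    by (intro nn_integral_cong) (auto simp: indicator_def coupling_space[OF c1])
  also have "\<dots> = emeasure \<pi>1 (\<Omega> \<times> E j)"
    by (simp add: coupling_sets[OF c1] pair_measureI Omega_sets)
  also have "\<dots> = emeasure \<nu> (E j)" by (rule coupling_snd[OF c1 nu E_sets])
  finally show ?thesis .
qed

lemma nu_cc_le: "emeasure \<nu> (E j) * cc j \<le> 1"
  using cc_nu[of j] by simp

lemma D1m[measurable]: "(\<lambda>q. ennreal (dist (fst q) (snd q))) \<in> borel_measurable MM"
  using measurable_compose[OF dist_meas measurable_ennreal] by simp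

lemma int_D1: "\<pi> \<in> couplings \<Omega> \<alpha> \<beta> \<Longrightarrow> (\<integral>\<^sup>+q. ennreal (dist (fst q) (snd q)) \<partial>\<pi>) = ennreal (cost \<pi>)"
  unfolding cost_def
  by (rule nn_integral_eq_integral[OF coupling_integrable]) (auto intro!: AE_I2)

lemma GG_cost:
  assumes d0: "0 \<le> \<delta>" and dE: "\<And>j x y. x \<in> E j \<Longrightarrow> y \<in> E j \<Longrightarrow> dist x y \<le> \<delta>"
  shows "cost GG \<le> cost \<pi>1 + \<delta> + cost \<pi>2"
proof -
  define D1 where "D1 = (\<lambda>q::'a\<times>'a. ennreal (dist (fst q) (snd q)))"
  have D1m'[measurable]: "D1 \<in> borel_measurable MM" unfolding D1_def by (rule D1m)
  have cG: "GG \<in> couplings \<Omega> \<mu> \<rho>" by (rule GG_coupling)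
  have mA[measurable]: "(\<lambda>p. ff p * (D1 (fst p) * 1)) \<in> borel_measurable PP"
    unfolding meas_PP_eq ff_def by measurable
  have mB[measurable]: "(\<lambda>p. ff p * (1 * 1) * ennreal \<delta>) \<in> borel_measurable PP"
    unfolding meas_PP_eq ff_def by measurable
  have mC[measurable]: "(\<lambda>p. ff p * (1 * D1 (snd p))) \<in> borel_measurable PP"
    unfolding meas_PP_eq ff_def by measurable
  have "ennreal (cost GG) = (\<integral>\<^sup>+q. D1 q \<partial>GG)"
    unfolding D1_def by (rule int_D1[OF cG, symmetric])
  also have "\<dots> = (\<integral>\<^sup>+p. D1 (proj p) \<partial>density PP ff)"
    unfolding GG_def by (rule nn_integral_distr[OF proj_meas']) simp
  also have "\<dots> = (\<integral>\<^sup>+p. ff p * D1 (proj p) \<partial>PP)"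
    by (rule nn_integral_density[OF ff_meas measurable_compose[OF proj_meas D1m']])
  also have "\<dots> \<le> (\<integral>\<^sup>+p. ff p * (D1 (fst p) * 1) + ff p * (1 * 1) * ennreal \<delta> + ff p * (1 * D1 (snd p)) \<partial>PP)"
  proof (rule nn_integral_mono)
    fix p assume "p \<in> space PP"
    obtain x y y' z where p: "p = ((x,y),(y',z))" by (metis prod.collapse)
    show "ff p * D1 (proj p) \<le> ff p * (D1 (fst p) * 1) + ff p * (1 * 1) * ennreal \<delta> + ff p * (1 * D1 (snd p))"
    proof (cases "ff p = 0")
      case True then show ?thesis by simp
    next
      case False
      then obtain j where "j \<in> {..<m}" "indicator (E j) y * indicator (E j) y' * cc j \<noteq> (0::ennreal)"
        unfolding ff_def p by (auto elim: sum.not_neutral_contains_not_neutral)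
      then have "y \<in> E j" "y' \<in> E j" by (auto simp: indicator_def split: if_splits)
      then have "dist y y' \<le> \<delta>" by (rule dE)
      then have "dist x z \<le> dist x y + \<delta> + dist y' z"
        using dist_triangle[of x z y] dist_triangle[of y z y'] by linarith
      then have "ennreal (dist x z) \<le> ennreal (dist x y + \<delta> + dist y' z)"
        by (rule ennreal_leI)
      also have "\<dots> = ennreal (dist x y) + ennreal \<delta> + ennreal (dist y' z)"
        using d0 by (simp add: ennreal_plus)
      finally have "D1 (proj p) \<le> D1 (fst p) + ennreal \<delta> + D1 (snd p)"
        by (simp add: p D1_def)
      then have "ff p * D1 (proj p) \<le> ff p * (D1 (fst p) + ennreal \<delta> + D1 (snd p))"
        by (rule mult_left_mono) simp
      then show ?thesis by (simp add: distrib_left)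
    qed
  qed
  also have "\<dots> = (\<integral>\<^sup>+p. ff p * (D1 (fst p) * 1) + ff p * (1 * 1) * ennreal \<delta> \<partial>PP) + (\<integral>\<^sup>+p. ff p * (1 * D1 (snd p)) \<partial>PP)"
    by (rule nn_integral_add) measurable
  also have "(\<integral>\<^sup>+p. ff p * (D1 (fst p) * 1) + ff p * (1 * 1) * ennreal \<delta> \<partial>PP) =
      (\<integral>\<^sup>+p. ff p * (D1 (fst p) * 1) \<partial>PP) + (\<integral>\<^sup>+p. ff p * (1 * 1) \<partial>PP) * ennreal \<delta>"
    by (subst nn_integral_add) (measurable, simp add: nn_integral_multc)
  also have "(\<integral>\<^sup>+p. ff p * (1 * 1) \<partial>PP) = 1"
  proof -
    have "(\<integral>\<^sup>+p. ff p * (1 * 1) \<partial>PP) = (\<integral>\<^sup>+p. ff p * indicator (\<Omega> \<times> \<Omega>) (proj p) \<partial>PP)"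
      by (intro nn_integral_cong) (auto simp: space_PP indicator_def)
    also have "\<dots> = emeasure GG (\<Omega> \<times> \<Omega>)"
      by (rule GG_emeasure[symmetric]) (intro pair_measureI Omega_sets)
    also have "\<dots> = emeasure \<mu> \<Omega>" by (rule G_fst[OF Omega_sets])
    also have "\<dots> = 1" using prob_space.emeasure_space_1[OF bp_prob[OF mu]] bp_space[OF mu] by simp
    finally show ?thesis .
  qed
  also have "(\<integral>\<^sup>+p. ff p * (D1 (fst p) * 1) \<partial>PP) \<le> ennreal (cost \<pi>1)"
  proof -
    have "(\<integral>\<^sup>+p. ff p * (D1 (fst p) * (\<lambda>_. 1) (snd p)) \<partial>PP) =
      (\<Sum>j<m. (\<integral>\<^sup>+q. indicator (E j) (snd q) * D1 q \<partial>\<pi>1) * (\<integral>\<^sup>+q. indicator (E j) (fst q) * 1 \<partial>\<pi>2) * cc j)"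
      by (rule KI) measurable
    also have "\<dots> \<le> (\<Sum>j<m. (\<integral>\<^sup>+q. indicator (E j) (snd q) * D1 q \<partial>\<pi>1))"
    proof (rule sum_mono)
      fix j
      have "(\<integral>\<^sup>+q. indicator (E j) (snd q) * D1 q \<partial>\<pi>1) * (emeasure \<nu> (E j) * cc j)
          \<le> (\<integral>\<^sup>+q. indicator (E j) (snd q) * D1 q \<partial>\<pi>1) * 1"
        by (rule mult_left_mono[OF nu_cc_le]) simp
      then show "(\<integral>\<^sup>+q. indicator (E j) (snd q) * D1 q \<partial>\<pi>1) * (\<integral>\<^sup>+q. indicator (E j) (fst q) * 1 \<partial>\<pi>2) * cc j
          \<le> (\<integral>\<^sup>+q. indicator (E j) (snd q) * D1 q \<partial>\<pi>1)"
        using int_E_fst[of j] by (simp add: mult.assoc)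
    qed
    also have "\<dots> = (\<integral>\<^sup>+q. (\<Sum>j<m. indicator (E j) (snd q) * D1 q) \<partial>\<pi>1)"
      by (rule nn_integral_sum[symmetric]) (unfold coupling_meas_eq[OF c1], measurable)
    also have "\<dots> = (\<integral>\<^sup>+q. D1 q \<partial>\<pi>1)"
      by (intro nn_integral_cong) (auto simp: sum_distrib_right[symmetric] sum_ind_one coupling_space[OF c1])
    also have "\<dots> = ennreal (cost \<pi>1)" unfolding D1_def by (rule int_D1[OF c1])
    finally show ?thesis by simp
  qed
  also have "(\<integral>\<^sup>+p. ff p * (1 * D1 (snd p)) \<partial>PP) \<le> ennreal (cost \<pi>2)"
  proof -
    have "(\<integral>\<^sup>+p. ff p * ((\<lambda>_. 1) (fst p) * D1 (snd p)) \<partial>PP) =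
      (\<Sum>j<m. (\<integral>\<^sup>+q. indicator (E j) (snd q) * 1 \<partial>\<pi>1) * (\<integral>\<^sup>+q. indicator (E j) (fst q) * D1 q \<partial>\<pi>2) * cc j)"
      by (rule KI) measurable
    also have "\<dots> \<le> (\<Sum>j<m. (\<integral>\<^sup>+q. indicator (E j) (fst q) * D1 q \<partial>\<pi>2))"
    proof (rule sum_mono)
      fix j
      have "(\<integral>\<^sup>+q. indicator (E j) (fst q) * D1 q \<partial>\<pi>2) * (emeasure \<nu> (E j) * cc j)
          \<le> (\<integral>\<^sup>+q. indicator (E j) (fst q) * D1 q \<partial>\<pi>2) * 1"
        by (rule mult_left_mono[OF nu_cc_le]) simp
      then show "(\<integral>\<^sup>+q. indicator (E j) (snd q) * 1 \<partial>\<pi>1) * (\<integral>\<^sup>+q. indicator (E j) (fst q) * D1 q \<partial>\<pi>2) * cc j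
          \<le> (\<integral>\<^sup>+q. indicator (E j) (fst q) * D1 q \<partial>\<pi>2)"
        using int_E_snd[of j] by (simp add: ac_simps)
    qed
    also have "\<dots> = (\<integral>\<^sup>+q. (\<Sum>j<m. indicator (E j) (fst q) * D1 q) \<partial>\<pi>2)"
      by (rule nn_integral_sum[symmetric]) (unfold coupling_meas_eq[OF c2], measurable)
    also have "\<dots> = (\<integral>\<^sup>+q. D1 q \<partial>\<pi>2)"
      by (intro nn_integral_cong) (auto simp: sum_distrib_right[symmetric] sum_ind_one coupling_space[OF c2])
    also have "\<dots> = ennreal (cost \<pi>2)" unfolding D1_def by (rule int_D1[OF c2])
    finally show ?thesis by simp
  qed
  finally have "ennreal (cost GG) \<le> ennreal (cost \<pi>1) + 1 * ennreal \<delta> + ennreal (cost \<pi>2)"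
    by (simp add: add_mono)
  also have "\<dots> = ennreal (cost \<pi>1 + \<delta> + cost \<pi>2)"
    using d0 cost_nonneg[OF c1] cost_nonneg[OF c2] by (simp add: ennreal_plus)
  finally have h: "ennreal (cost GG) \<le> ennreal (cost \<pi>1 + \<delta> + cost \<pi>2)" .
  have nn: "0 \<le> cost \<pi>1 + \<delta> + cost \<pi>2" using d0 cost_nonneg[OF c1] cost_nonneg[OF c2] by simp
  show ?thesis using ennreal_le_iff[OF nn] h by blast
qed

end

context cms begin

lemma W1_triangle:
  assumes mu: "\<mu> \<in> borel_prob \<Omega>" and nu: "\<nu> \<in> borel_prob \<Omega>" and rho: "\<rho> \<in> borel_prob \<Omega>"
  shows "W1 \<Omega> \<mu> \<rho> \<le> W1 \<Omega> \<mu> \<nu> + W1 \<Omega> \<nu> \<rho>"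
proof (rule field_le_epsilon)
  fix e :: real assume e: "0 < e"
  obtain \<pi>1 where c1: "\<pi>1 \<in> couplings \<Omega> \<mu> \<nu>" and h1: "cost \<pi>1 < W1 \<Omega> \<mu> \<nu> + e/3"
    using W1_approx[OF mu nu, of "e/3"] e by auto
  obtain \<pi>2 where c2: "\<pi>2 \<in> couplings \<Omega> \<nu> \<rho>" and h2: "cost \<pi>2 < W1 \<Omega> \<nu> \<rho> + e/3"
    using W1_approx[OF nu rho, of "e/3"] e by auto
  have e3: "0 < e/3" using e by simp
  obtain E :: "nat \<Rightarrow> 'a set" and m :: nat where
    E: "\<And>j. E j \<in> sets MO" "disjoint_family_on E {..<m}" "(\<Union>j<m. E j) = \<Omega>"
       "\<And>j x y. x \<in> E j \<Longrightarrow> y \<in> E j \<Longrightarrow> dist x y \<le> e/3"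
    by (rule partition[OF e3]) blast
  interpret g: glue \<Omega> \<mu> \<nu> \<rho> \<pi>1 \<pi>2 m E
    by (intro glue.intro glue_axioms.intro cms_axioms mu nu rho c1 c2 E)
  have "W1 \<Omega> \<mu> \<rho> \<le> cost g.GG" by (rule W1_le_cost[OF g.GG_coupling])
  also have "\<dots> \<le> cost \<pi>1 + e/3 + cost \<pi>2" by (rule g.GG_cost) (use e E in auto)
  finally show "W1 \<Omega> \<mu> \<rho> \<le> W1 \<Omega> \<mu> \<nu> + W1 \<Omega> \<nu> \<rho> + e" using h1 h2 by linarith
qed

end



lemma msum_list: "sum_mset (image_mset g (mset xs)) = (\<Sum>i<length xs. g (xs!i))"
  by (induction xs) (simp_all add: sum.lessThan_Suc_shift del: sum.lessThan_Suc)

lemma msum_tendsto: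
  fixes f :: "nat \<Rightarrow> 'b \<Rightarrow> real"
  shows "(\<And>y. y \<in># M \<Longrightarrow> (\<lambda>n. f n y) \<longlonglongrightarrow> g y) \<Longrightarrow>
   (\<lambda>n. sum_mset (image_mset (f n) M)) \<longlonglongrightarrow> sum_mset (image_mset g M)"
proof (induction M)
  case empty then show ?case by simp
next
  case (add x M)
  have "(\<lambda>n. f n x) \<longlonglongrightarrow> g x" using add.prems by simp
  moreover have "(\<lambda>n. sum_mset (image_mset (f n) M)) \<longlonglongrightarrow> sum_mset (image_mset g M)"
    using add.IH add.prems by simp
  ultimately show ?case by (simp add: tendsto_add)
qed

lemma msum_diff: "sum_mset (image_mset (\<lambda>y. f y - g y) M) = sum_mset (image_mset f M) - (sum_mset (image_mset g M) :: real)"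
  by (induction M) auto

lemma msum_add: "sum_mset (image_mset (\<lambda>y. f y + g y) M) = sum_mset (image_mset f M) + (sum_mset (image_mset g M) :: real)"
  by (induction M) auto

lemma msum_sum: "sum_mset (image_mset (\<lambda>y. \<Sum>i\<in>I. f i y) M) = (\<Sum>i\<in>I. (sum_mset (image_mset (f i) M) :: real))"
  by (induction M) (auto simp: sum.distrib)

lemma msum_nonneg: "(\<And>y. y \<in># M \<Longrightarrow> 0 \<le> f y) \<Longrightarrow> 0 \<le> sum_mset (image_mset f M :: real multiset)"
  by (induction M) auto

lemma msum_mono: "(\<And>y. y \<in># M \<Longrightarrow> f y \<le> g y) \<Longrightarrow> sum_mset (image_mset f M) \<le> sum_mset (image_mset g M :: real multiset)"
  by (induction M) (auto intro: add_mono)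

lemma msum_cmult: "sum_mset (image_mset (\<lambda>y. c * f y) M) = c * sum_mset (image_mset f M :: real multiset)"
  by (induction M) (auto simp: distrib_left)

lemma ind_UN_lim: "(\<lambda>n. indicator (\<Union>i<n. A i) y :: real) \<longlonglongrightarrow> indicator (\<Union>i. A i) y"
proof (cases "y \<in> (\<Union>i. A i)")
  case True
  then obtain j where j: "y \<in> A j" by blast
  have "eventually (\<lambda>n. indicator (\<Union>i<n. A i) y = (indicator (\<Union>i. A i) y :: real)) sequentially"
    using j by (intro eventually_sequentiallyI[of "Suc j"]) (auto simp: indicator_def)
  then show ?thesis by (rule tendsto_eventually)
next
  case False
  then have "\<And>n. indicator (\<Union>i<n. A i) y = (indicator (\<Union>i. A i) y :: real)" by (auto simp: indicator_def)
  then show ?thesis by simp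
qed

locale ics = cms +
  fixes F :: "'a \<Rightarrow> 'a multiset" and k :: nat and \<theta> :: real
  assumes ics: "is_ICS \<Omega> k \<theta> F" and th0: "0 \<le> \<theta>" and th1: "\<theta> \<le> 1"
begin

lemma F_sub: "x \<in> \<Omega> \<Longrightarrow> set_mset (F x) \<subseteq> \<Omega>"
  using ics by (auto simp: is_ICS_def)

lemma F_size: "x \<in> \<Omega> \<Longrightarrow> size (F x) = k"
  using ics by (auto simp: is_ICS_def)

lemma msum_cont:
  fixes g :: "'a \<Rightarrow> real"
  assumes g: "continuous_on \<Omega> g"
  shows "continuous_on \<Omega> (\<lambda>x. sum_mset (image_mset g (F x)))"
proof -
  have uc: "uniformly_continuous_on \<Omega> g" using compact_uniformly_continuous[OF g cpt] .
  have "uniformly_continuous_on \<Omega> (\<lambda>x. sum_mset (image_mset g (F x)))"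
    unfolding uniformly_continuous_on_def
  proof (intro allI impI)
    fix e :: real assume e: "0 < e"
    define e' where "e' = e / (real k + 1)"
    have e': "0 < e'" using e by (simp add: e'_def)
    obtain d where d: "0 < d" "\<forall>x\<in>\<Omega>. \<forall>x'\<in>\<Omega>. dist x' x < d \<longrightarrow> dist (g x') (g x) < e'"
      using uc e' unfolding uniformly_continuous_on_def by metis
    show "\<exists>d>0. \<forall>x\<in>\<Omega>. \<forall>x'\<in>\<Omega>. dist x' x < d \<longrightarrow>
        dist (sum_mset (image_mset g (F x'))) (sum_mset (image_mset g (F x))) < e"
    proof (intro exI[of _ d] conjI ballI impI)
      show "0 < d" by fact
      fix x x' assume x: "x \<in> \<Omega>" and x': "x' \<in> \<Omega>" and dx: "dist x' x < d"
      obtain xs ys where xs: "mset xs = F x'" and ys: "mset ys = F x"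
        and dd: "\<forall>i<k. dist (xs!i) (ys!i) \<le> \<theta> * dist x' x"
        using ics x x' unfolding is_ICS_def by blast
      have lx: "length xs = k" using F_size[OF x'] xs by (metis size_mset)
      have ly: "length ys = k" using F_size[OF x] ys by (metis size_mset)
      have xO: "xs!i \<in> \<Omega>" if "i < k" for i
        using F_sub[OF x'] xs lx that by (metis nth_mem set_mset_mset subsetD)
      have yO: "ys!i \<in> \<Omega>" if "i < k" for i
        using F_sub[OF x] ys ly that by (metis nth_mem set_mset_mset subsetD)
      have trm: "\<bar>g (xs!i) - g (ys!i)\<bar> < e'" if i: "i < k" for i
      proof -
        have "dist (xs!i) (ys!i) \<le> \<theta> * dist x' x" using dd i by blast
        also have "\<dots> \<le> dist x' x" using mult_right_mono[OF th1 zero_le_dist[of x' x]] by simp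
        finally have "dist (xs!i) (ys!i) < d" using dx by linarith
        then have "dist (g (xs!i)) (g (ys!i)) < e'" using d(2) xO[OF i] yO[OF i] by blast
        then show ?thesis by (simp add: dist_real_def)
      qed
      have "dist (sum_mset (image_mset g (F x'))) (sum_mset (image_mset g (F x)))
          = \<bar>(\<Sum>i<k. g (xs!i)) - (\<Sum>i<k. g (ys!i))\<bar>"
        using msum_list[of g xs] msum_list[of g ys] xs ys lx ly by (simp add: dist_real_def)
      also have "\<dots> = \<bar>\<Sum>i<k. g (xs!i) - g (ys!i)\<bar>" by (simp add: sum_subtractf)
      also have "\<dots> \<le> (\<Sum>i<k. \<bar>g (xs!i) - g (ys!i)\<bar>)" by (rule sum_abs)
      also have "\<dots> \<le> (\<Sum>i<k. e')" by (intro sum_mono less_imp_le trm) simp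
      also have "\<dots> = real k * e'" by simp
      also have "\<dots> < e" using e by (simp add: e'_def field_simps)
      finally show "dist (sum_mset (image_mset g (F x'))) (sum_mset (image_mset g (F x))) < e" .
    qed
  qed
  then show ?thesis by (rule uniformly_continuous_imp_continuous)
qed

lemma cont_meas: "continuous_on \<Omega> (g :: 'a \<Rightarrow> real) \<Longrightarrow> (\<lambda>x. sum_mset (image_mset g (F x))) \<in> borel_measurable MO"
  using msum_cont borel_measurable_continuous_on_restrict by blast

definition msum :: "('a \<Rightarrow> real) \<Rightarrow> 'a set \<Rightarrow> 'a \<Rightarrow> real" where
  "msum w S x = sum_mset (image_mset (\<lambda>y. w y * indicator S y) (F x))"

lemma msum_sums: "disjoint_family A \<Longrightarrow> (\<lambda>i. msum w (A i) x) sums msum w (\<Union>i. A i) x"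
proof -
  assume dA: "disjoint_family A"
  have eq: "(\<Sum>i<n. msum w (A i) x) = sum_mset (image_mset (\<lambda>y. w y * indicator (\<Union>i<n. A i) y) (F x))" for n
  proof -
    have "(\<Sum>i<n. msum w (A i) x) = sum_mset (image_mset (\<lambda>y. \<Sum>i<n. w y * indicator (A i) y) (F x))"
      unfolding msum_def by (rule msum_sum[symmetric])
    also have "\<dots> = sum_mset (image_mset (\<lambda>y. w y * indicator (\<Union>i<n. A i) y) (F x))"
    proof -
      have disj: "disjoint_family_on A {..<n}" using dA by (auto simp: disjoint_family_on_def)
      have h: "(\<Sum>i<n. w y * indicator (A i) y) = w y * indicator (\<Union>i<n. A i) y" for y
      proof -
        have "(\<Sum>i<n. w y * indicator (A i) y) = w y * (\<Sum>i<n. indicator (A i) y)"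
          by (rule sum_distrib_left[symmetric])
        also have "(\<Sum>i<n. indicator (A i) y) = (indicator (\<Union>i<n. A i) y :: real)"
          by (rule indicator_UN_disjoint[symmetric]) (simp_all add: disj)
        finally show ?thesis .
      qed
      show ?thesis by (intro arg_cong[where f=sum_mset] image_mset_cong) (rule h)
    qed
    finally show ?thesis .
  qed
  show ?thesis unfolding sums_def eq
    unfolding msum_def by (intro msum_tendsto tendsto_mult tendsto_const ind_UN_lim)
qed

lemma msum_meas_borel:
  assumes w: "continuous_on \<Omega> w" and B: "B \<in> sets borel"
  shows "msum w B \<in> borel_measurable MO"
proof -
  have univ: "msum w UNIV \<in> borel_measurable MO"
    unfolding msum_def using cont_meas[OF w] by simp
  have "Int_stable {S::'a set. open S}" "{S::'a set. open S} \<subseteq> Pow UNIV" "B \<in> sigma_sets UNIV {S. open S}"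
    using B by (auto simp: Int_stable_def sets_borel)
  then show ?thesis
  proof (induction rule: sigma_sets_induct_disjoint)
    fix U :: "'a set" assume "U \<in> {S. open S}"
    then have U: "open U" by simp
    show "msum w U \<in> borel_measurable MO"
    proof (cases "U = UNIV")
      case True then show ?thesis using univ by simp
    next
      case False
      define u where "u n x = sum_mset (image_mset (\<lambda>y. w y * min 1 (real (Suc n) * infdist y (- U))) (F x))" for n x
      have um: "u n \<in> borel_measurable MO" for n
        unfolding u_def by (intro cont_meas continuous_intros w)
      have lim: "(\<lambda>n. u n x) \<longlonglongrightarrow> msum w U x" for x
        unfolding u_def msum_def
      proof (intro msum_tendsto)
        fix y
        show "(\<lambda>n. w y * min 1 (real (Suc n) * infdist y (- U))) \<longlonglongrightarrow> w y * indicator U y"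
        proof (cases "y \<in> U")
          case True
          have pos: "0 < infdist y (- U)"
            using True False U by (intro infdist_pos_not_in_closed) (auto simp: closed_Compl)
          obtain N where N: "inverse (real (Suc N)) < infdist y (- U)"
            using reals_Archimedean[OF pos] by blast
          have "eventually (\<lambda>n. w y * min 1 (real (Suc n) * infdist y (- U)) = w y * indicator U y) sequentially"
          proof (intro eventually_sequentiallyI[of N])
            fix n assume n: "N \<le> n"
            have "1 < real (Suc N) * infdist y (- U)"
              using N by (simp add: field_simps)
            also have "\<dots> \<le> real (Suc n) * infdist y (- U)"
              using n pos by (intro mult_right_mono) auto
            finally show "w y * min 1 (real (Suc n) * infdist y (- U)) = w y * indicator U y"
              using True by simp
          qed
          then show ?thesis by (rule tendsto_eventually)
        next
          case False
          then show ?thesis by simp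
        qed
      qed
      show ?thesis by (rule borel_measurable_LIMSEQ_real[OF lim um])
    qed
  next
    have z: "sum_mset (image_mset (\<lambda>y. 0::real) M) = 0" for M :: "'a multiset"
      by (induction M) auto
    have "msum w {} = (\<lambda>x. 0)" by (rule ext) (simp add: msum_def z)
    then show "msum w {} \<in> borel_measurable MO" by simp
  next
    fix A :: "'a set" assume "A \<in> sigma_sets UNIV {S. open S}" and IH: "msum w A \<in> borel_measurable MO"
    have "msum w (UNIV - A) x = msum w UNIV x - msum w A x" for x
    proof -
      have "msum w (UNIV - A) x = sum_mset (image_mset (\<lambda>y. w y * indicator UNIV y - w y * indicator A y) (F x))"
        unfolding msum_def by (intro arg_cong[where f=sum_mset] image_mset_cong) (simp add: indicator_def)
      then show ?thesis by (simp add: msum_diff msum_def)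
    qed
    then have "msum w (UNIV - A) = (\<lambda>x. msum w UNIV x - msum w A x)" by (rule ext)
    then show "msum w (UNIV - A) \<in> borel_measurable MO" using univ IH by simp
  next
    fix A :: "nat \<Rightarrow> 'a set" assume dA: "disjoint_family A" and "range A \<subseteq> sigma_sets UNIV {S. open S}" and IH: "\<And>i. msum w (A i) \<in> borel_measurable MO"
    have "(\<lambda>n. \<Sum>i<n. msum w (A i) x) \<longlonglongrightarrow> msum w (\<Union>(range A)) x" for x
      using msum_sums[OF dA, of w x] by (simp add: sums_def)
    moreover have "(\<lambda>x. \<Sum>i<n. msum w (A i) x) \<in> borel_measurable MO" for n
      using IH by (intro borel_measurable_sum) auto
    ultimately show "msum w (\<Union>(range A)) \<in> borel_measurable MO"
      by (rule borel_measurable_LIMSEQ_real)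
  qed
qed

lemma Omega_borel: "\<Omega> \<in> sets borel"
  using cpt by (simp add: compact_imp_closed borel_closed)

lemma sets_MO_iff: "S \<in> sets MO \<longleftrightarrow> S \<subseteq> \<Omega> \<and> S \<in> sets borel"
  using Omega_borel by (intro sets_restrict_space_iff) simp

lemma msum_meas:
  assumes w: "continuous_on \<Omega> w" and S: "S \<in> sets MO"
  shows "msum w S \<in> borel_measurable MO"
  using msum_meas_borel[OF w] S sets_MO_iff by blast

lemma msum_nonneg':
  assumes "\<And>y. y \<in> \<Omega> \<Longrightarrow> 0 \<le> w y" "x \<in> \<Omega>"
  shows "0 \<le> msum w S x"
  unfolding msum_def using assms F_sub[OF assms(2)] by (intro msum_nonneg) auto

definition Kw :: "('a \<Rightarrow> real) \<Rightarrow> 'a measure \<Rightarrow> 'a measure" where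
  "Kw w \<nu> = measure_of \<Omega> (sets MO) (\<lambda>S. \<integral>\<^sup>+x. ennreal (msum w S x) \<partial>\<nu>)"

lemma td_Kw: "transfer_dual \<Omega> F A \<nu> = Kw (\<lambda>y. exp (A y)) \<nu>"
  by (simp add: transfer_dual_def Kw_def transfer_op_def msum_def)

lemma sets_MO_pow: "sets MO \<subseteq> Pow \<Omega>"
  using sets.space_closed[of MO] by simp

lemma Kw_sets: "sets (Kw w \<nu>) = sets MO"
proof -
  have "sets (Kw w \<nu>) = sigma_sets \<Omega> (sets MO)"
    unfolding Kw_def by (rule sets_measure_of[OF sets_MO_pow])
  also have "\<dots> = sets MO" using sets.sigma_sets_eq[of MO] by simp
  finally show ?thesis .
qed

lemma Kw_space: "space (Kw w \<nu>) = \<Omega>"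
  using sets_eq_imp_space_eq[OF Kw_sets] by simp

lemma Kw_emeasure:
  assumes nu: "sets \<nu> = sets MO" and w: "continuous_on \<Omega> w" and wp: "\<And>y. y \<in> \<Omega> \<Longrightarrow> 0 \<le> w y"
    and S: "S \<in> sets MO"
  shows "emeasure (Kw w \<nu>) S = (\<integral>\<^sup>+x. ennreal (msum w S x) \<partial>\<nu>)"
proof -
  have spn: "space \<nu> = \<Omega>" using sets_eq_imp_space_eq[OF nu] by simp
  have mm: "(\<lambda>x. ennreal (msum w T x)) \<in> borel_measurable \<nu>" if "T \<in> sets MO" for T
    using measurable_compose[OF msum_meas[OF w that] measurable_ennreal]
    by (simp add: measurable_cong_sets[OF nu refl])
  show ?thesis
  proof (rule emeasure_measure_of[OF Kw_def sets_MO_pow])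
    show "positive (sets (Kw w \<nu>)) (\<lambda>S. \<integral>\<^sup>+x. ennreal (msum w S x) \<partial>\<nu>)"
      by (simp add: positive_def msum_def)
    show "countably_additive (sets (Kw w \<nu>)) (\<lambda>S. \<integral>\<^sup>+x. ennreal (msum w S x) \<partial>\<nu>)"
      unfolding countably_additive_def
    proof (intro allI impI)
      fix A :: "nat \<Rightarrow> 'a set"
      assume A: "range A \<subseteq> sets (Kw w \<nu>)" and dA: "disjoint_family A"
      have A': "A i \<in> sets MO" for i using A Kw_sets by auto
      have "(\<Sum>i. \<integral>\<^sup>+x. ennreal (msum w (A i) x) \<partial>\<nu>) = (\<integral>\<^sup>+x. (\<Sum>i. ennreal (msum w (A i) x)) \<partial>\<nu>)"
        by (rule nn_integral_suminf[symmetric]) (rule mm[OF A'])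
      also have "\<dots> = (\<integral>\<^sup>+x. ennreal (msum w (\<Union>(range A)) x) \<partial>\<nu>)"
      proof (intro nn_integral_cong)
        fix x assume "x \<in> space \<nu>"
        then have x: "x \<in> \<Omega>" using spn by simp
        have s: "(\<lambda>i. msum w (A i) x) sums msum w (\<Union>i. A i) x" by (rule msum_sums[OF dA])
        show "(\<Sum>i. ennreal (msum w (A i) x)) = ennreal (msum w (\<Union>(range A)) x)"
          using suminf_ennreal2[OF msum_nonneg'[OF wp x] sums_summable[OF s]] sums_unique[OF s]
          by simp
      qed
      finally show "(\<Sum>i. \<integral>\<^sup>+x. ennreal (msum w (A i) x) \<partial>\<nu>) = (\<integral>\<^sup>+x. ennreal (msum w (\<Union>(range A)) x) \<partial>\<nu>)" .
    qed
    show "S \<in> sets (Kw w \<nu>)" using S Kw_sets by simp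
  qed
qed

lemma msum_Omega: "x \<in> \<Omega> \<Longrightarrow> msum w \<Omega> x = sum_mset (image_mset w (F x))"
  unfolding msum_def using F_sub[of x]
  by (intro arg_cong[where f=sum_mset] image_mset_cong) (auto simp: indicator_def)

lemma Kw_total:
  assumes nu: "sets \<nu> = sets MO" and w: "continuous_on \<Omega> w" and wp: "\<And>y. y \<in> \<Omega> \<Longrightarrow> 0 \<le> w y"
  shows "emeasure (Kw w \<nu>) \<Omega> = (\<integral>\<^sup>+x. ennreal (sum_mset (image_mset w (F x))) \<partial>\<nu>)"
proof -
  have spn: "space \<nu> = \<Omega>" using sets_eq_imp_space_eq[OF nu] by simp
  have "emeasure (Kw w \<nu>) \<Omega> = (\<integral>\<^sup>+x. ennreal (msum w \<Omega> x) \<partial>\<nu>)"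
    by (rule Kw_emeasure[OF nu w wp Omega_sets])
  also have "\<dots> = (\<integral>\<^sup>+x. ennreal (sum_mset (image_mset w (F x))) \<partial>\<nu>)"
    by (intro nn_integral_cong) (simp add: spn msum_Omega)
  finally show ?thesis .
qed

lemma Kw_add:
  assumes nu: "sets \<nu> = sets MO" and w1: "continuous_on \<Omega> w1" and wp1: "\<And>y. y \<in> \<Omega> \<Longrightarrow> 0 \<le> w1 y"
    and w2: "continuous_on \<Omega> w2" and wp2: "\<And>y. y \<in> \<Omega> \<Longrightarrow> 0 \<le> w2 y" and S: "S \<in> sets MO"
  shows "emeasure (Kw (\<lambda>y. w1 y + w2 y) \<nu>) S = emeasure (Kw w1 \<nu>) S + emeasure (Kw w2 \<nu>) S"
proof -
  have spn: "space \<nu> = \<Omega>" using sets_eq_imp_space_eq[OF nu] by simp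
  have mm: "(\<lambda>x. ennreal (msum w S x)) \<in> borel_measurable \<nu>" if "continuous_on \<Omega> w" for w
    using measurable_compose[OF msum_meas[OF that S] measurable_ennreal]
    by (simp add: measurable_cong_sets[OF nu refl])
  have w12: "continuous_on \<Omega> (\<lambda>y. w1 y + w2 y)" using w1 w2 by (intro continuous_intros)
  have "emeasure (Kw (\<lambda>y. w1 y + w2 y) \<nu>) S = (\<integral>\<^sup>+x. ennreal (msum (\<lambda>y. w1 y + w2 y) S x) \<partial>\<nu>)"
    using Kw_emeasure[OF nu w12 _ S] wp1 wp2 by (simp add: add_nonneg_nonneg)
  also have "\<dots> = (\<integral>\<^sup>+x. ennreal (msum w1 S x) + ennreal (msum w2 S x) \<partial>\<nu>)"
  proof (intro nn_integral_cong)
    fix x assume "x \<in> space \<nu>"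
    then have x: "x \<in> \<Omega>" using spn by simp
    have "msum (\<lambda>y. w1 y + w2 y) S x = msum w1 S x + msum w2 S x"
      unfolding msum_def by (simp add: distrib_right msum_add)
    then show "ennreal (msum (\<lambda>y. w1 y + w2 y) S x) = ennreal (msum w1 S x) + ennreal (msum w2 S x)"
      using msum_nonneg'[OF wp1 x] msum_nonneg'[OF wp2 x] by (simp add: ennreal_plus)
  qed
  also have "\<dots> = (\<integral>\<^sup>+x. ennreal (msum w1 S x) \<partial>\<nu>) + (\<integral>\<^sup>+x. ennreal (msum w2 S x) \<partial>\<nu>)"
    by (rule nn_integral_add[OF mm[OF w1] mm[OF w2]])
  also have "\<dots> = emeasure (Kw w1 \<nu>) S + emeasure (Kw w2 \<nu>) S"
    using Kw_emeasure[OF nu w1 wp1 S] Kw_emeasure[OF nu w2 wp2 S] by simp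
  finally show ?thesis .
qed

lemma td_bp:
  assumes nuB: "\<nu> \<in> borel_prob \<Omega>" and A: "continuous_on \<Omega> A" and nA: "normalized \<Omega> F A"
  shows "transfer_dual \<Omega> F A \<nu> \<in> borel_prob \<Omega>"
proof -
  have nu: "sets \<nu> = sets MO" using bp_sets[OF nuB] .
  interpret prob_space \<nu> using bp_prob[OF nuB] .
  have wc: "continuous_on \<Omega> (\<lambda>y. exp (A y))" using A by (intro continuous_intros)
  have spn: "space \<nu> = \<Omega>" using sets_eq_imp_space_eq[OF nu] by simp
  have "emeasure (Kw (\<lambda>y. exp (A y)) \<nu>) (space (Kw (\<lambda>y. exp (A y)) \<nu>)) =
      (\<integral>\<^sup>+x. ennreal (sum_mset (image_mset (\<lambda>y. exp (A y)) (F x))) \<partial>\<nu>)"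
    using Kw_total[OF nu wc] by (simp add: Kw_space)
  also have "\<dots> = (\<integral>\<^sup>+x. 1 \<partial>\<nu>)"
    using nA by (intro nn_integral_cong) (simp add: normalized_def spn)
  also have "\<dots> = 1" by (simp add: emeasure_space_1)
  finally have "prob_space (Kw (\<lambda>y. exp (A y)) \<nu>)" by (rule prob_spaceI)
  then show ?thesis unfolding borel_prob_def td_Kw using Kw_sets by simp
qed

lemma td_pow_bp:
  assumes "\<nu> \<in> borel_prob \<Omega>" "continuous_on \<Omega> A" "normalized \<Omega> F A"
  shows "(transfer_dual \<Omega> F A ^^ n) \<nu> \<in> borel_prob \<Omega>"
  by (induction n) (auto intro: td_bp assms)

end



definition add_measure :: "'b measure \<Rightarrow> 'b measure \<Rightarrow> 'b measure" where
  "add_measure P Q = measure_of (space P) (sets P) (\<lambda>S. emeasure P S + emeasure Q S)"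

lemma add_measure_sets: "sets (add_measure P Q) = sets P"
proof -
  have "sets (add_measure P Q) = sigma_sets (space P) (sets P)"
    unfolding add_measure_def by (rule sets_measure_of[OF sets.space_closed])
  also have "\<dots> = sets P" by (rule sets.sigma_sets_eq)
  finally show ?thesis .
qed

lemma add_measure_emeasure:
  assumes QP: "sets Q = sets P" and S: "S \<in> sets P"
  shows "emeasure (add_measure P Q) S = emeasure P S + emeasure Q S"
proof (rule emeasure_measure_of[OF add_measure_def sets.space_closed])
  show "positive (sets (add_measure P Q)) (\<lambda>S. emeasure P S + emeasure Q S)"
    by (simp add: positive_def)
  show "countably_additive (sets (add_measure P Q)) (\<lambda>S. emeasure P S + emeasure Q S)"
    unfolding countably_additive_def add_measure_sets
  proof (intro allI impI)
    fix A :: "nat \<Rightarrow> _" assume A: "range A \<subseteq> sets P" and dA: "disjoint_family A"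
    have A': "range A \<subseteq> sets Q" using A QP by simp
    show "(\<Sum>i. emeasure P (A i) + emeasure Q (A i)) = emeasure P (\<Union>(range A)) + emeasure Q (\<Union>(range A))"
      using suminf_add[OF summableI summableI, of "\<lambda>i. emeasure P (A i)" "\<lambda>i. emeasure Q (A i)"]
        suminf_emeasure[OF A dA] suminf_emeasure[OF A' dA] by simp
  qed
  show "S \<in> sets (add_measure P Q)" using S by (simp add: add_measure_sets)
qed

locale twopot = ics +
  fixes A B :: "'a \<Rightarrow> real" and \<epsilon> :: real and \<nu> :: "'a measure"
  assumes Ac: "continuous_on \<Omega> A" and Bc: "continuous_on \<Omega> B"
    and nA: "normalized \<Omega> F A" and nB: "normalized \<Omega> F B"
    and eps: "\<And>y. y \<in> \<Omega> \<Longrightarrow> \<bar>A y - B y\<bar> \<le> \<epsilon>" and nuB: "\<nu> \<in> borel_prob \<Omega>"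
begin

definition "wA y = exp (A y)"
definition "wB y = exp (B y)"
definition "wm y = min (wA y) (wB y)"
definition "wa y = wA y - wm y"
definition "wb y = wB y - wm y"

lemma eps0: "0 \<le> \<epsilon>"
proof -
  obtain y where y: "y \<in> \<Omega>" using ne by blast
  show ?thesis using eps[OF y] abs_ge_zero[of "A y - B y"] by linarith
qed

lemma nu: "sets \<nu> = sets MO" using bp_sets[OF nuB] .
lemma spn: "space \<nu> = \<Omega>" using bp_space[OF nuB] .

lemma wA_c: "continuous_on \<Omega> wA" unfolding wA_def using Ac by (intro continuous_intros)
lemma wB_c: "continuous_on \<Omega> wB" unfolding wB_def using Bc by (intro continuous_intros)
lemma wm_c: "continuous_on \<Omega> wm" unfolding wm_def using wA_c wB_c by (intro continuous_intros)
lemma wa_c: "continuous_on \<Omega> wa" unfolding wa_def using wA_c wm_c by (intro continuous_intros)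
lemma wb_c: "continuous_on \<Omega> wb" unfolding wb_def using wB_c wm_c by (intro continuous_intros)

lemma wA_eq: "wA = (\<lambda>y. exp (A y))" by (rule ext) (simp add: wA_def)
lemma wB_eq: "wB = (\<lambda>y. exp (B y))" by (rule ext) (simp add: wB_def)

lemma wm_p: "0 \<le> wm y" by (simp add: wm_def wA_def wB_def)
lemma wa_p: "0 \<le> wa y" by (simp add: wa_def wm_def)
lemma wb_p: "0 \<le> wb y" by (simp add: wb_def wm_def)

lemma KA: "transfer_dual \<Omega> F A \<nu> = Kw wA \<nu>" unfolding td_Kw wA_def ..
lemma KB: "transfer_dual \<Omega> F B \<nu> = Kw wB \<nu>" unfolding td_Kw wB_def ..

lemma KA_bp: "Kw wA \<nu> \<in> borel_prob \<Omega>" using td_bp[OF nuB Ac nA] KA by simp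
lemma KB_bp: "Kw wB \<nu> \<in> borel_prob \<Omega>" using td_bp[OF nuB Bc nB] KB by simp

lemma KA_split: "S \<in> sets MO \<Longrightarrow> emeasure (Kw wA \<nu>) S = emeasure (Kw wm \<nu>) S + emeasure (Kw wa \<nu>) S"
proof -
  assume S: "S \<in> sets MO"
  have "(\<lambda>y. wm y + wa y) = wA" by (rule ext) (simp add: wa_def)
  then show ?thesis using Kw_add[OF nu wm_c _ wa_c _ S] wm_p wa_p by simp
qed

lemma KB_split: "S \<in> sets MO \<Longrightarrow> emeasure (Kw wB \<nu>) S = emeasure (Kw wm \<nu>) S + emeasure (Kw wb \<nu>) S"
proof -
  assume S: "S \<in> sets MO"
  have "(\<lambda>y. wm y + wb y) = wB" by (rule ext) (simp add: wb_def)
  then show ?thesis using Kw_add[OF nu wm_c _ wb_c _ S] wm_p wb_p by simp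
qed

lemma sumA: "x \<in> \<Omega> \<Longrightarrow> sum_mset (image_mset wA (F x)) = 1"
  using nA by (simp add: normalized_def wA_eq)
lemma sumB: "x \<in> \<Omega> \<Longrightarrow> sum_mset (image_mset wB (F x)) = 1"
  using nB by (simp add: normalized_def wB_eq)

lemma Ka_Kb_total: "emeasure (Kw wa \<nu>) \<Omega> = emeasure (Kw wb \<nu>) \<Omega>"
proof -
  have "emeasure (Kw wa \<nu>) \<Omega> = (\<integral>\<^sup>+x. ennreal (sum_mset (image_mset wa (F x))) \<partial>\<nu>)"
    using Kw_total[OF nu wa_c] wa_p by simp
  also have "\<dots> = (\<integral>\<^sup>+x. ennreal (sum_mset (image_mset wb (F x))) \<partial>\<nu>)"
  proof (intro nn_integral_cong)
    fix x assume "x \<in> space \<nu>"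
    then have x: "x \<in> \<Omega>" using spn by simp
    have "sum_mset (image_mset wa (F x)) = sum_mset (image_mset wA (F x)) - sum_mset (image_mset wm (F x))"
      unfolding wa_def by (rule msum_diff)
    also have "\<dots> = sum_mset (image_mset wB (F x)) - sum_mset (image_mset wm (F x))"
      using sumA[OF x] sumB[OF x] by simp
    also have "\<dots> = sum_mset (image_mset wb (F x))"
      unfolding wb_def by (rule msum_diff[symmetric])
    finally show "ennreal (sum_mset (image_mset wa (F x))) = ennreal (sum_mset (image_mset wb (F x)))" by simp
  qed
  also have "\<dots> = emeasure (Kw wb \<nu>) \<Omega>"
    using Kw_total[OF nu wb_c] wb_p by simp
  finally show ?thesis .
qed

lemma wa_le: "y \<in> \<Omega> \<Longrightarrow> wa y \<le> \<epsilon> * wA y"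
proof -
  assume y: "y \<in> \<Omega>"
  show ?thesis
  proof (cases "wA y \<le> wB y")
    case True
    then show ?thesis using eps0 by (simp add: wa_def wm_def wA_def)
  next
    case False
    have "wB y = wA y * exp (B y - A y)" by (simp add: wA_def wB_def exp_diff)
    then have "wa y = wA y * (1 - exp (B y - A y))" using False by (simp add: wa_def wm_def algebra_simps)
    also have "\<dots> \<le> wA y * (A y - B y)"
    proof (rule mult_left_mono)
      have "1 + (B y - A y) \<le> exp (B y - A y)" by (rule exp_ge_add_one_self)
      then show "1 - exp (B y - A y) \<le> A y - B y" by linarith
    qed (simp add: wA_def)
    also have "\<dots> \<le> wA y * \<epsilon>"
      using eps[OF y] by (intro mult_left_mono) (auto simp: wA_def)
    finally show ?thesis by (simp add: mult.commute)
  qed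
qed

lemma Ka_le: "emeasure (Kw wa \<nu>) \<Omega> \<le> ennreal \<epsilon>"
proof -
  interpret prob_space \<nu> using bp_prob[OF nuB] .
  have "emeasure (Kw wa \<nu>) \<Omega> = (\<integral>\<^sup>+x. ennreal (sum_mset (image_mset wa (F x))) \<partial>\<nu>)"
    using Kw_total[OF nu wa_c] wa_p by simp
  also have "\<dots> \<le> (\<integral>\<^sup>+x. ennreal \<epsilon> \<partial>\<nu>)"
  proof (intro nn_integral_mono ennreal_leI)
    fix x assume "x \<in> space \<nu>"
    then have x: "x \<in> \<Omega>" using spn by simp
    have "sum_mset (image_mset wa (F x)) \<le> sum_mset (image_mset (\<lambda>y. \<epsilon> * wA y) (F x))"
      using F_sub[OF x] wa_le by (intro msum_mono) auto
    also have "\<dots> = \<epsilon>" using sumA[OF x] by (simp add: msum_cmult)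
    finally show "sum_mset (image_mset wa (F x)) \<le> \<epsilon>" .
  qed
  also have "\<dots> = ennreal \<epsilon>" by (simp add: emeasure_space_1)
  finally show ?thesis .
qed

lemma Ka_fin: "finite_measure (Kw wa \<nu>)"
proof (rule finite_measureI)
  show "emeasure (Kw wa \<nu>) (space (Kw wa \<nu>)) \<noteq> \<infinity>"
    using neq_top_trans[OF ennreal_neq_top Ka_le] by (simp add: Kw_space)
qed

lemma Kb_fin: "finite_measure (Kw wb \<nu>)"
proof (rule finite_measureI)
  show "emeasure (Kw wb \<nu>) (space (Kw wb \<nu>)) \<noteq> \<infinity>"
    using neq_top_trans[OF ennreal_neq_top Ka_le] Ka_Kb_total by (simp add: Kw_space)
qed

lemma Km_fin: "finite_measure (Kw wm \<nu>)"
proof -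
  have "emeasure (Kw wm \<nu>) \<Omega> \<le> emeasure (Kw wA \<nu>) \<Omega>" using KA_split[OF Omega_sets] by simp
  also have "\<dots> = 1" using prob_space.emeasure_space_1[OF bp_prob[OF KA_bp]] by (simp add: Kw_space)
  finally have le1: "emeasure (Kw wm \<nu>) \<Omega> \<le> 1" .
  have "emeasure (Kw wm \<nu>) \<Omega> \<noteq> \<infinity>" using neq_top_trans[OF _ le1] by simp
  then show ?thesis by (intro finite_measureI) (simp add: Kw_space)
qed

definition "s = measure (Kw wa \<nu>) \<Omega>"

lemma s0: "0 \<le> s" by (simp add: s_def)

lemma Ka_s: "emeasure (Kw wa \<nu>) \<Omega> = ennreal s"
  unfolding s_def using finite_measure.emeasure_eq_measure[OF Ka_fin] .

lemma Kb_s: "emeasure (Kw wb \<nu>) \<Omega> = ennreal s"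
  using Ka_s Ka_Kb_total by simp

lemma s_le: "s \<le> \<epsilon>" using Ka_le Ka_s eps0 by simp

abbreviation "diag \<equiv> (\<lambda>y::'a. (y, y))"
definition "DD = distr (Kw wm \<nu>) MM diag"
definition "PR = scale_measure (ennreal (1 / s)) (Kw wa \<nu> \<Otimes>\<^sub>M Kw wb \<nu>)"
definition "PI = add_measure DD PR"

lemma diag_meas: "diag \<in> Kw wm \<nu> \<rightarrow>\<^sub>M MM"
  unfolding measurable_cong_sets[OF Kw_sets refl] by measurable

lemma sets_DD: "sets DD = sets MM" by (simp add: DD_def)
lemma sets_PR: "sets PR = sets MM"
  by (simp add: PR_def, intro sets_pair_measure_cong Kw_sets)
lemma sets_PI: "sets PI = sets MM" by (simp add: PI_def add_measure_sets sets_DD)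
lemma space_PI: "space PI = \<Omega> \<times> \<Omega>" using sets_eq_imp_space_eq[OF sets_PI] by simp

lemma PI_em: "X \<in> sets MM \<Longrightarrow> emeasure PI X = emeasure (Kw wm \<nu>) (diag -` X \<inter> \<Omega>) + ennreal (1/s) * emeasure (Kw wa \<nu> \<Otimes>\<^sub>M Kw wb \<nu>) X"
proof -
  assume X: "X \<in> sets MM"
  have "emeasure PI X = emeasure DD X + emeasure PR X"
    unfolding PI_def using X sets_DD sets_PR by (intro add_measure_emeasure) auto
  also have "emeasure DD X = emeasure (Kw wm \<nu>) (diag -` X \<inter> \<Omega>)"
    unfolding DD_def using X diag_meas by (simp add: emeasure_distr Kw_space)
  also have "emeasure PR X = ennreal (1/s) * emeasure (Kw wa \<nu> \<Otimes>\<^sub>M Kw wb \<nu>) X"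
    by (simp add: PR_def)
  finally show ?thesis .
qed

lemma prod_times: "S \<in> sets MO \<Longrightarrow> T \<in> sets MO \<Longrightarrow>
   emeasure (Kw wa \<nu> \<Otimes>\<^sub>M Kw wb \<nu>) (S \<times> T) = emeasure (Kw wa \<nu>) S * emeasure (Kw wb \<nu>) T"
proof -
  assume S: "S \<in> sets MO" and T: "T \<in> sets MO"
  interpret Kb: finite_measure "Kw wb \<nu>" by (rule Kb_fin)
  show ?thesis using S T by (intro Kb.emeasure_pair_measure_Times) (simp_all add: Kw_sets)
qed

lemma PI_fst: "S \<in> sets MO \<Longrightarrow> emeasure PI (S \<times> \<Omega>) = emeasure (Kw wA \<nu>) S"
proof -
  assume S: "S \<in> sets MO"
  have SO: "S \<subseteq> \<Omega>" using sets_MO_sub[OF S] .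
  have X: "S \<times> \<Omega> \<in> sets MM" using S by (intro pair_measureI Omega_sets)
  have "emeasure PI (S \<times> \<Omega>) = emeasure (Kw wm \<nu>) S + ennreal (1/s) * (emeasure (Kw wa \<nu>) S * ennreal s)"
  proof -
    have ds: "diag -` (S \<times> \<Omega>) \<inter> \<Omega> = S" using SO by auto
    show ?thesis unfolding PI_em[OF X] ds prod_times[OF S Omega_sets] Kb_s ..
  qed
  also have "ennreal (1/s) * (emeasure (Kw wa \<nu>) S * ennreal s) = emeasure (Kw wa \<nu>) S"
  proof (cases "s = 0")
    case True
    have "emeasure (Kw wa \<nu>) S \<le> emeasure (Kw wa \<nu>) \<Omega>" using SO by (intro emeasure_mono) (simp_all add: Kw_sets Omega_sets)
    then show ?thesis using True Ka_s by simp
  next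
    case False
    have "ennreal (1/s) * (emeasure (Kw wa \<nu>) S * ennreal s) = emeasure (Kw wa \<nu>) S * (ennreal (1/s) * ennreal s)"
      by (simp add: ac_simps)
    also have "ennreal (1/s) * ennreal s = ennreal (1/s * s)" by (rule ennreal_mult[symmetric]) (simp_all add: s0)
    also have "1/s * s = 1" using False by simp
    finally show ?thesis by simp
  qed
  finally show ?thesis using KA_split[OF S] by simp
qed

lemma PI_snd: "T \<in> sets MO \<Longrightarrow> emeasure PI (\<Omega> \<times> T) = emeasure (Kw wB \<nu>) T"
proof -
  assume T: "T \<in> sets MO"
  have TO: "T \<subseteq> \<Omega>" using sets_MO_sub[OF T] .
  have X: "\<Omega> \<times> T \<in> sets MM" using T by (intro pair_measureI Omega_sets)
  have "emeasure PI (\<Omega> \<times> T) = emeasure (Kw wm \<nu>) T + ennreal (1/s) * (ennreal s * emeasure (Kw wb \<nu>) T)"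
  proof -
    have ds: "diag -` (\<Omega> \<times> T) \<inter> \<Omega> = T" using TO by auto
    show ?thesis unfolding PI_em[OF X] ds prod_times[OF Omega_sets T] Ka_s ..
  qed
  also have "ennreal (1/s) * (ennreal s * emeasure (Kw wb \<nu>) T) = emeasure (Kw wb \<nu>) T"
  proof (cases "s = 0")
    case True
    have "emeasure (Kw wb \<nu>) T \<le> emeasure (Kw wb \<nu>) \<Omega>" using TO by (intro emeasure_mono) (simp_all add: Kw_sets Omega_sets)
    then show ?thesis using True Kb_s by simp
  next
    case False
    have "ennreal (1/s) * (ennreal s * emeasure (Kw wb \<nu>) T) = emeasure (Kw wb \<nu>) T * (ennreal (1/s) * ennreal s)"
      by (simp add: ac_simps)
    also have "ennreal (1/s) * ennreal s = ennreal (1/s * s)" by (rule ennreal_mult[symmetric]) (simp_all add: s0)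
    also have "1/s * s = 1" using False by simp
    finally show ?thesis by simp
  qed
  finally show ?thesis using KB_split[OF T] by simp
qed

lemma PI_coupling: "PI \<in> couplings \<Omega> (Kw wA \<nu>) (Kw wB \<nu>)"
proof -
  have pr: "prob_space PI"
  proof (rule prob_spaceI)
    have "emeasure PI (space PI) = emeasure (Kw wA \<nu>) \<Omega>" using PI_fst[OF Omega_sets] by (simp add: space_PI)
    also have "\<dots> = 1" using prob_space.emeasure_space_1[OF bp_prob[OF KA_bp]] by (simp add: Kw_space)
    finally show "emeasure PI (space PI) = 1" .
  qed
  have mf: "fst \<in> PI \<rightarrow>\<^sub>M Kw wA \<nu>"
    unfolding measurable_cong_sets[OF sets_PI Kw_sets] by measurable
  have ms: "snd \<in> PI \<rightarrow>\<^sub>M Kw wB \<nu>"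
    unfolding measurable_cong_sets[OF sets_PI Kw_sets] by measurable
  have d1: "distr PI (Kw wA \<nu>) fst = Kw wA \<nu>"
  proof (rule measure_eqI)
    fix S assume "S \<in> sets (distr PI (Kw wA \<nu>) fst)"
    then have S: "S \<in> sets MO" by (simp add: Kw_sets)
    have "emeasure (distr PI (Kw wA \<nu>) fst) S = emeasure PI (fst -` S \<inter> space PI)"
      using mf S by (simp add: emeasure_distr Kw_sets)
    also have "fst -` S \<inter> space PI = S \<times> \<Omega>" using sets_MO_sub[OF S] by (auto simp: space_PI)
    finally show "emeasure (distr PI (Kw wA \<nu>) fst) S = emeasure (Kw wA \<nu>) S" using PI_fst[OF S] by simp
  qed simp
  have d2: "distr PI (Kw wB \<nu>) snd = Kw wB \<nu>"
  proof (rule measure_eqI)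
    fix S assume "S \<in> sets (distr PI (Kw wB \<nu>) snd)"
    then have S: "S \<in> sets MO" by (simp add: Kw_sets)
    have "emeasure (distr PI (Kw wB \<nu>) snd) S = emeasure PI (snd -` S \<inter> space PI)"
      using ms S by (simp add: emeasure_distr Kw_sets)
    also have "snd -` S \<inter> space PI = \<Omega> \<times> S" using sets_MO_sub[OF S] by (auto simp: space_PI)
    finally show "emeasure (distr PI (Kw wB \<nu>) snd) S = emeasure (Kw wB \<nu>) S" using PI_snd[OF S] by simp
  qed simp
  show ?thesis unfolding couplings_def using pr sets_PI d1 d2 by auto
qed

lemma PI_cost: "cost PI \<le> diameter \<Omega> * s"
proof -
  have c: "PI \<in> couplings \<Omega> (Kw wA \<nu>) (Kw wB \<nu>)" by (rule PI_coupling)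
  define Off where "Off = (\<lambda>p. dist (fst p) (snd p)) -` (- {0}) \<inter> space MM"
  have Off: "Off \<in> sets MM" unfolding Off_def
    by (rule measurable_sets[OF dist_meas]) (simp add: borel_open open_Compl)
  have "ennreal (cost PI) = (\<integral>\<^sup>+q. ennreal (dist (fst q) (snd q)) \<partial>PI)"
    unfolding cost_def
    by (rule nn_integral_eq_integral[OF coupling_integrable[OF c], symmetric]) (auto intro!: AE_I2)
  also have "\<dots> \<le> (\<integral>\<^sup>+q. ennreal (diameter \<Omega>) * indicator Off q \<partial>PI)"
  proof (intro nn_integral_mono)
    fix q assume q: "q \<in> space PI"
    then have qO: "fst q \<in> \<Omega>" "snd q \<in> \<Omega>" by (auto simp: space_PI)
    show "ennreal (dist (fst q) (snd q)) \<le> ennreal (diameter \<Omega>) * indicator Off q"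
    proof (cases "dist (fst q) (snd q) = 0")
      case True then show ?thesis by simp
    next
      case False
      then have "q \<in> Off" using q by (auto simp: Off_def space_PI)
      then show ?thesis using dist_le_diam[OF qO] by (simp add: ennreal_leI)
    qed
  qed
  also have "\<dots> = ennreal (diameter \<Omega>) * emeasure PI Off"
    using Off sets_PI by (simp add: nn_integral_cmult_indicator)
  also have "emeasure PI Off \<le> ennreal s"
  proof -
    have e0: "diag -` Off \<inter> \<Omega> = {}" by (auto simp: Off_def)
    have "emeasure (Kw wa \<nu> \<Otimes>\<^sub>M Kw wb \<nu>) Off \<le> emeasure (Kw wa \<nu> \<Otimes>\<^sub>M Kw wb \<nu>) (\<Omega> \<times> \<Omega>)"
      using Off by (intro emeasure_mono) (auto simp: Off_def sets_pair_measure_cong[OF Kw_sets Kw_sets])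
    also have "\<dots> = ennreal s * ennreal s" using prod_times[OF Omega_sets Omega_sets] Ka_s Kb_s by simp
    finally have pb: "emeasure (Kw wa \<nu> \<Otimes>\<^sub>M Kw wb \<nu>) Off \<le> ennreal s * ennreal s" .
    have "emeasure PI Off = ennreal (1/s) * emeasure (Kw wa \<nu> \<Otimes>\<^sub>M Kw wb \<nu>) Off"
      using PI_em[OF Off] e0 by simp
    also have "\<dots> \<le> ennreal (1/s) * (ennreal s * ennreal s)" by (rule mult_left_mono[OF pb]) simp
    also have "\<dots> = ennreal (1/s * s * s)" using s0 by (simp add: ennreal_mult[symmetric] mult.assoc)
    also have "\<dots> \<le> ennreal s" by (cases "s = 0") simp_all
    finally show ?thesis .
  qed
  then have "ennreal (diameter \<Omega>) * emeasure PI Off \<le> ennreal (diameter \<Omega>) * ennreal s"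
    by (rule mult_left_mono) simp
  also have "\<dots> = ennreal (diameter \<Omega> * s)" using diam_nonneg s0 by (simp add: ennreal_mult)
  finally have h: "ennreal (cost PI) \<le> ennreal (diameter \<Omega> * s)" .
  have nn: "0 \<le> diameter \<Omega> * s" using diam_nonneg s0 by simp
  show ?thesis using ennreal_le_iff[OF nn] h by blast
qed

lemma W1_AB: "W1 \<Omega> (transfer_dual \<Omega> F A \<nu>) (transfer_dual \<Omega> F B \<nu>) \<le> diameter \<Omega> * \<epsilon>"
proof -
  have "W1 \<Omega> (transfer_dual \<Omega> F A \<nu>) (transfer_dual \<Omega> F B \<nu>) \<le> cost PI"
    unfolding KA KB by (rule W1_le_cost[OF PI_coupling])
  also have "\<dots> \<le> diameter \<Omega> * s" by (rule PI_cost)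
  also have "\<dots> \<le> diameter \<Omega> * \<epsilon>" using s_le diam_nonneg by (intro mult_left_mono)
  finally show ?thesis .
qed

end



lemma Lip_lip:
  assumes "lipschitz_on L X f"
  shows "lipschitz_on (Lip X f) X f"
proof -
  let ?S = "{L. lipschitz_on L X f}"
  have ne: "?S \<noteq> {}" using assms by blast
  have bdd: "bdd_below ?S" by (intro bdd_belowI[of _ 0]) (auto dest: lipschitz_on_nonneg)
  have nn: "0 \<le> Lip X f" unfolding Lip_def using ne by (intro cInf_greatest) (auto dest: lipschitz_on_nonneg)
  show ?thesis
  proof (rule lipschitz_onI[OF _ nn])
    fix x y assume x: "x \<in> X" and y: "y \<in> X"
    show "dist (f x) (f y) \<le> Lip X f * dist x y"
    proof (cases "dist x y = 0")
      case True then show ?thesis by simp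
    next
      case False
      then have dpos: "0 < dist x y" by simp
      have "dist (f x) (f y) / dist x y \<le> Lip X f"
        unfolding Lip_def
      proof (rule cInf_greatest[OF ne])
        fix L assume "L \<in> ?S"
        then have "dist (f x) (f y) \<le> L * dist x y" using x y by (auto intro: lipschitz_onD)
        then show "dist (f x) (f y) / dist x y \<le> L" using dpos by (simp add: divide_le_eq)
      qed
      then show ?thesis using dpos by (simp add: divide_le_eq)
    qed
  qed
qed

context cms begin

lemma lip_int_bound:
  assumes mu: "\<mu> \<in> borel_prob \<Omega>" and nu: "\<nu> \<in> borel_prob \<Omega>" and L: "lipschitz_on L \<Omega> \<phi>"
  shows "\<bar>(\<integral>x. \<phi> x \<partial>\<mu>) - (\<integral>x. \<phi> x \<partial>\<nu>)\<bar> \<le> L * W1 \<Omega> \<mu> \<nu>"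
proof -
  have L0: "0 \<le> L" using L by (rule lipschitz_on_nonneg)
  have pc: "continuous_on \<Omega> \<phi>" using L by (rule lipschitz_on_continuous_on)
  have pm: "\<phi> \<in> borel_measurable MO" using pc by (rule borel_measurable_continuous_on_restrict)
  have "compact (\<phi> ` \<Omega>)" using pc cpt by (rule compact_continuous_image)
  then obtain Mb where Mb: "\<And>x. x \<in> \<Omega> \<Longrightarrow> norm (\<phi> x) \<le> Mb"
    using compact_imp_bounded[of "\<phi> ` \<Omega>"] by (auto simp: bounded_iff)
  have Mb': "\<And>x. x \<in> \<Omega> \<Longrightarrow> \<bar>\<phi> x\<bar> \<le> Mb" using Mb by simp
  have cpl: "\<bar>(\<integral>x. \<phi> x \<partial>\<mu>) - (\<integral>x. \<phi> x \<partial>\<nu>)\<bar> \<le> L * cost \<pi>" if c: "\<pi> \<in> couplings \<Omega> \<mu> \<nu>" for \<pi>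
  proof -
    interpret P: prob_space \<pi> using coupling_prob[OF c] .
    have mf: "fst \<in> \<pi> \<rightarrow>\<^sub>M \<mu>" unfolding coupling_meas_eq[OF c] bp_meas_eq[OF mu] by measurable
    have ms: "snd \<in> \<pi> \<rightarrow>\<^sub>M \<nu>" unfolding coupling_meas_eq[OF c] bp_meas_eq[OF nu] by measurable
    have pmu: "\<phi> \<in> borel_measurable \<mu>" using pm measurable_cong_sets[OF bp_sets[OF mu] refl] by blast
    have pnu: "\<phi> \<in> borel_measurable \<nu>" using pm measurable_cong_sets[OF bp_sets[OF nu] refl] by blast
    have e1: "(\<integral>x. \<phi> x \<partial>\<mu>) = (\<integral>p. \<phi> (fst p) \<partial>\<pi>)"
    proof -
      have "(\<integral>x. \<phi> x \<partial>\<mu>) = (\<integral>x. \<phi> x \<partial>distr \<pi> \<mu> fst)" using c by (simp add: couplings_def)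
      also have "\<dots> = (\<integral>p. \<phi> (fst p) \<partial>\<pi>)" by (rule integral_distr[OF mf pmu])
      finally show ?thesis .
    qed
    have e2: "(\<integral>x. \<phi> x \<partial>\<nu>) = (\<integral>p. \<phi> (snd p) \<partial>\<pi>)"
    proof -
      have "(\<integral>x. \<phi> x \<partial>\<nu>) = (\<integral>x. \<phi> x \<partial>distr \<pi> \<nu> snd)" using c by (simp add: couplings_def)
      also have "\<dots> = (\<integral>p. \<phi> (snd p) \<partial>\<pi>)" by (rule integral_distr[OF ms pnu])
      finally show ?thesis .
    qed
    have i1: "integrable \<pi> (\<lambda>p. \<phi> (fst p))"
      by (rule P.integrable_const_bound[where B=Mb])
         (auto intro!: AE_I2 Mb' simp: coupling_space[OF c] measurable_compose[OF mf pmu])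
    have i2: "integrable \<pi> (\<lambda>p. \<phi> (snd p))"
      by (rule P.integrable_const_bound[where B=Mb])
         (auto intro!: AE_I2 Mb' simp: coupling_space[OF c] measurable_compose[OF ms pnu])
    have "\<bar>(\<integral>p. \<phi> (fst p) \<partial>\<pi>) - (\<integral>p. \<phi> (snd p) \<partial>\<pi>)\<bar> = \<bar>\<integral>p. \<phi> (fst p) - \<phi> (snd p) \<partial>\<pi>\<bar>"
      by (simp add: Bochner_Integration.integral_diff[OF i1 i2])
    also have "\<dots> \<le> (\<integral>p. norm (\<phi> (fst p) - \<phi> (snd p)) \<partial>\<pi>)"
      using integral_norm_bound[of \<pi> "\<lambda>p. \<phi> (fst p) - \<phi> (snd p)"] by simp
    also have "\<dots> \<le> (\<integral>p. L * dist (fst p) (snd p) \<partial>\<pi>)"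
    proof (rule integral_mono)
      show "integrable \<pi> (\<lambda>p. norm (\<phi> (fst p) - \<phi> (snd p)))" using i1 i2 by auto
      show "integrable \<pi> (\<lambda>p. L * dist (fst p) (snd p))" using coupling_integrable[OF c] by auto
      fix p assume "p \<in> space \<pi>"
      then have "fst p \<in> \<Omega>" "snd p \<in> \<Omega>" by (auto simp: coupling_space[OF c])
      then show "norm (\<phi> (fst p) - \<phi> (snd p)) \<le> L * dist (fst p) (snd p)"
        using lipschitz_onD[OF L] by (simp add: dist_real_def)
    qed
    also have "\<dots> = L * cost \<pi>" by (simp add: cost_def)
    finally show ?thesis using e1 e2 by simp
  qed
  show ?thesis
  proof (rule field_le_epsilon)
    fix e :: real assume e: "0 < e"
    define e1 where "e1 = e / (L + 1)"
    have e1: "0 < e1" using e L0 by (simp add: e1_def)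
    obtain \<pi> where c: "\<pi> \<in> couplings \<Omega> \<mu> \<nu>" and h: "cost \<pi> < W1 \<Omega> \<mu> \<nu> + e1"
      using W1_approx[OF mu nu e1] by blast
    have "\<bar>(\<integral>x. \<phi> x \<partial>\<mu>) - (\<integral>x. \<phi> x \<partial>\<nu>)\<bar> \<le> L * cost \<pi>" by (rule cpl[OF c])
    also have "\<dots> \<le> L * (W1 \<Omega> \<mu> \<nu> + e1)" using h L0 by (intro mult_left_mono) auto
    also have "\<dots> = L * W1 \<Omega> \<mu> \<nu> + L * e1" by (simp add: algebra_simps)
    also have "L * e1 \<le> e"
    proof -
      have "L * e1 = e * (L / (L + 1))" by (simp add: e1_def)
      also have "\<dots> \<le> e * 1" using e L0 by (intro mult_left_mono) auto
      finally show ?thesis by simp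
    qed
    finally show "\<bar>(\<integral>x. \<phi> x \<partial>\<mu>) - (\<integral>x. \<phi> x \<partial>\<nu>)\<bar> \<le> L * W1 \<Omega> \<mu> \<nu> + e" by simp
  qed
qed

end

theorem mainTheorem4:
  fixes \<Omega> :: "'a::metric_space set" and F :: "'a \<Rightarrow> 'a multiset"
    and k :: nat and \<theta> C r :: real and A B :: "'a \<Rightarrow> real"
    and \<mu>A \<mu>B :: "'a measure"
  assumes "compact \<Omega>"
    and "0 < \<theta>" "\<theta> < 1"
    and "is_ICS \<Omega> k \<theta> F" and "has_attractor \<Omega> F"
    and "\<exists>L. lipschitz_on L \<Omega> A" and "\<exists>L. lipschitz_on L \<Omega> B"
    and "normalized \<Omega> F A" and "normalized \<Omega> F B"
    and "\<mu>A \<in> borel_prob \<Omega>" and "transfer_dual \<Omega> F A \<mu>A = \<mu>A"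
    and "\<mu>B \<in> borel_prob \<Omega>" and "transfer_dual \<Omega> F B \<mu>B = \<mu>B"
    and "0 < C" and "0 < r" and "r < 1"
    and "\<forall>n. \<forall>\<mu>\<in>borel_prob \<Omega>. \<forall>\<nu>\<in>borel_prob \<Omega>.
           W1 \<Omega> ((transfer_dual \<Omega> F A ^^ n) \<mu>) ((transfer_dual \<Omega> F A ^^ n) \<nu>)
             \<le> C * r ^ n * W1 \<Omega> \<mu> \<nu>"
  shows "W1 \<Omega> \<mu>A \<mu>B \<le> C / (1 - r) * diameter \<Omega> * sup_norm \<Omega> (\<lambda>x. A x - B x)
       \<and> (\<forall>\<phi>. (\<exists>L. lipschitz_on L \<Omega> \<phi>) \<longrightarrow>
            \<bar>(\<integral>x. \<phi> x \<partial>\<mu>A) - (\<integral>x. \<phi> x \<partial>\<mu>B)\<bar>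
              \<le> C / (1 - r) * diameter \<Omega> * Lip \<Omega> \<phi> * sup_norm \<Omega> (\<lambda>x. A x - B x))"
proof -
  note as = assms
  have ne: "\<Omega> \<noteq> {}"
  proof -
    interpret prob_space \<mu>A using as(10) by (simp add: borel_prob_def)
    have "space \<mu>A = \<Omega>" using as(10) sets_eq_imp_space_eq[of \<mu>A "restrict_space borel \<Omega>"]
      by (simp add: borel_prob_def space_restrict_space)
    then show ?thesis using not_empty by simp
  qed
  interpret ics \<Omega> F k \<theta>
    by (intro ics.intro ics_axioms.intro cms.intro as(1) ne as(4)) (use as(2,3) in auto)
  have Ac: "continuous_on \<Omega> A" using as(6) lipschitz_on_continuous_on by blast
  have Bc: "continuous_on \<Omega> B" using as(7) lipschitz_on_continuous_on by blast
  define \<epsilon> where "\<epsilon> = sup_norm \<Omega> (\<lambda>x. A x - B x)"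
  have eps: "\<bar>A y - B y\<bar> \<le> \<epsilon>" if y: "y \<in> \<Omega>" for y
  proof -
    have "compact ((\<lambda>x. \<bar>A x - B x\<bar>) ` \<Omega>)"
      using Ac Bc cpt by (intro compact_continuous_image continuous_intros)
    then have "bdd_above ((\<lambda>x. \<bar>A x - B x\<bar>) ` \<Omega>)"
      by (intro bounded_imp_bdd_above compact_imp_bounded)
    then show ?thesis unfolding \<epsilon>_def sup_norm_def by (rule cSUP_upper[OF y])
  qed
  have eps0: "0 \<le> \<epsilon>" using ne eps by (meson abs_ge_zero all_not_in_conv order_trans)
  define L where "L = transfer_dual \<Omega> F A"
  define D where "D = diameter \<Omega>"
  have D0: "0 \<le> D" unfolding D_def by (rule diam_nonneg)
  have muA: "\<mu>A \<in> borel_prob \<Omega>" and muB: "\<mu>B \<in> borel_prob \<Omega>" using as by auto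
  have H: "W1 \<Omega> ((L ^^ n) \<mu>) ((L ^^ n) \<nu>) \<le> C * r ^ n * W1 \<Omega> \<mu> \<nu>"
    if "\<mu> \<in> borel_prob \<Omega>" "\<nu> \<in> borel_prob \<Omega>" for n \<mu> \<nu>
    using as(17) that unfolding L_def by blast
  have bpL: "(L ^^ n) \<nu> \<in> borel_prob \<Omega>" if "\<nu> \<in> borel_prob \<Omega>" for n \<nu>
    unfolding L_def by (rule td_pow_bp[OF that Ac as(8)])
  have AB: "W1 \<Omega> (L \<nu>) (transfer_dual \<Omega> F B \<nu>) \<le> D * \<epsilon>" if "\<nu> \<in> borel_prob \<Omega>" for \<nu>
  proof -
    interpret tp: twopot \<Omega> F k \<theta> A B \<epsilon> \<nu>
      by (intro twopot.intro twopot_axioms.intro ics_axioms Ac Bc as(8,9) eps that)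
    show ?thesis unfolding L_def D_def by (rule tp.W1_AB)
  qed
  define x where "x n = (L ^^ n) \<mu>B" for n
  have xbp: "x n \<in> borel_prob \<Omega>" for n unfolding x_def by (rule bpL[OF muB])
  have step: "W1 \<Omega> (x (Suc n)) (x n) \<le> C * r ^ n * (D * \<epsilon>)" for n
  proof -
    have L1: "L \<mu>B \<in> borel_prob \<Omega>" using bpL[OF muB, of 1] by simp
    have "x (Suc n) = (L ^^ n) (L \<mu>B)" unfolding x_def by (simp only: funpow_Suc_right comp_def)
    then have "W1 \<Omega> (x (Suc n)) (x n) \<le> C * r ^ n * W1 \<Omega> (L \<mu>B) \<mu>B"
      unfolding x_def using H[OF L1 muB, of n] by simp
    also have "W1 \<Omega> (L \<mu>B) \<mu>B \<le> D * \<epsilon>" using AB[OF muB] as(13) by simp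
    then have "C * r ^ n * W1 \<Omega> (L \<mu>B) \<mu>B \<le> C * r ^ n * (D * \<epsilon>)"
      using as(14,15) by (intro mult_left_mono) auto
    finally show ?thesis .
  qed
  have tel: "W1 \<Omega> (x (Suc N)) \<mu>B \<le> (\<Sum>n<Suc N. C * r ^ n * (D * \<epsilon>))" for N
  proof (induction N)
    case 0
    then show ?case using step[of 0] by (simp add: x_def)
  next
    case (Suc N)
    have "W1 \<Omega> (x (Suc (Suc N))) \<mu>B \<le> W1 \<Omega> (x (Suc (Suc N))) (x (Suc N)) + W1 \<Omega> (x (Suc N)) \<mu>B"
      by (rule W1_triangle[OF xbp xbp muB])
    also have "\<dots> \<le> C * r ^ Suc N * (D * \<epsilon>) + (\<Sum>n<Suc N. C * r ^ n * (D * \<epsilon>))"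
      using step[of "Suc N"] Suc.IH by simp
    also have "\<dots> = (\<Sum>n<Suc (Suc N). C * r ^ n * (D * \<epsilon>))" by simp
    finally show ?case .
  qed
  have geo: "(\<Sum>n<m. C * r ^ n * (D * \<epsilon>)) \<le> C / (1 - r) * D * \<epsilon>" for m
  proof -
    have "(\<Sum>n<m. C * r ^ n * (D * \<epsilon>)) = C * (D * \<epsilon>) * (\<Sum>n<m. r ^ n)"
      by (simp add: sum_distrib_left sum_distrib_right ac_simps)
    also have "(\<Sum>n<m. r ^ n) = (1 - r ^ m) / (1 - r)" using as(16) by (simp add: sum_gp_strict)
    also have "\<dots> \<le> 1 / (1 - r)" using as(15,16) by (intro divide_right_mono) auto
    then have "C * (D * \<epsilon>) * ((1 - r ^ m) / (1 - r)) \<le> C * (D * \<epsilon>) * (1 / (1 - r))"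
      using as(14) D0 eps0 by (intro mult_left_mono) auto
    also have "\<dots> = C / (1 - r) * D * \<epsilon>" by simp
    finally show ?thesis .
  qed
  have fixA: "(L ^^ n) \<mu>A = \<mu>A" for n
    by (induction n) (auto simp: L_def as(11))
  have bound: "W1 \<Omega> \<mu>A \<mu>B \<le> C * r ^ Suc N * D + C / (1 - r) * D * \<epsilon>" for N
  proof -
    have "W1 \<Omega> \<mu>A \<mu>B \<le> W1 \<Omega> \<mu>A (x (Suc N)) + W1 \<Omega> (x (Suc N)) \<mu>B"
      by (rule W1_triangle[OF muA xbp muB])
    also have "W1 \<Omega> \<mu>A (x (Suc N)) \<le> C * r ^ Suc N * D"
    proof -
      have "W1 \<Omega> \<mu>A (x (Suc N)) = W1 \<Omega> ((L ^^ Suc N) \<mu>A) ((L ^^ Suc N) \<mu>B)"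
        by (simp only: fixA x_def)
      also have "\<dots> \<le> C * r ^ Suc N * W1 \<Omega> \<mu>A \<mu>B" by (rule H[OF muA muB])
      also have "\<dots> \<le> C * r ^ Suc N * D"
        using W1_le_diam[OF muA muB] as(14,15) unfolding D_def by (intro mult_left_mono) auto
      finally show ?thesis .
    qed
    also have "W1 \<Omega> (x (Suc N)) \<mu>B \<le> C / (1 - r) * D * \<epsilon>" using tel[of N] geo[of "Suc N"] by linarith
    finally show ?thesis by simp
  qed
  have lim: "(\<lambda>N. C * r ^ Suc N * D + C / (1 - r) * D * \<epsilon>) \<longlonglongrightarrow> 0 + C / (1 - r) * D * \<epsilon>"
  proof (intro tendsto_add tendsto_const)
    have "(\<lambda>N. r ^ Suc N) \<longlonglongrightarrow> 0"
      using LIMSEQ_Suc[OF LIMSEQ_power_zero[of r]] as(15,16) by simp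
    then have "(\<lambda>N. C * r ^ Suc N * D) \<longlonglongrightarrow> C * 0 * D"
      by (intro tendsto_mult tendsto_const)
    then show "(\<lambda>N. C * r ^ Suc N * D) \<longlonglongrightarrow> 0" by simp
  qed
  have W: "W1 \<Omega> \<mu>A \<mu>B \<le> C / (1 - r) * D * \<epsilon>"
    using LIMSEQ_le_const[OF lim] bound by auto
  show ?thesis
  proof
    show "W1 \<Omega> \<mu>A \<mu>B \<le> C / (1 - r) * diameter \<Omega> * sup_norm \<Omega> (\<lambda>x. A x - B x)"
      using W unfolding D_def \<epsilon>_def .
    show "\<forall>\<phi>. (\<exists>L. lipschitz_on L \<Omega> \<phi>) \<longrightarrow>
            \<bar>(\<integral>x. \<phi> x \<partial>\<mu>A) - (\<integral>x. \<phi> x \<partial>\<mu>B)\<bar>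
              \<le> C / (1 - r) * diameter \<Omega> * Lip \<Omega> \<phi> * sup_norm \<Omega> (\<lambda>x. A x - B x)"
    proof (intro allI impI)
      fix \<phi> :: "'a \<Rightarrow> real" assume "\<exists>L. lipschitz_on L \<Omega> \<phi>"
      then obtain L0 where "lipschitz_on L0 \<Omega> \<phi>" by blast
      then have LL: "lipschitz_on (Lip \<Omega> \<phi>) \<Omega> \<phi>" by (rule Lip_lip)
      have Lp: "0 \<le> Lip \<Omega> \<phi>" using LL by (rule lipschitz_on_nonneg)
      have "\<bar>(\<integral>x. \<phi> x \<partial>\<mu>A) - (\<integral>x. \<phi> x \<partial>\<mu>B)\<bar> \<le> Lip \<Omega> \<phi> * W1 \<Omega> \<mu>A \<mu>B"
        by (rule lip_int_bound[OF muA muB LL])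
      also have "\<dots> \<le> Lip \<Omega> \<phi> * (C / (1 - r) * D * \<epsilon>)" using W Lp by (rule mult_left_mono)
      also have "\<dots> = C / (1 - r) * diameter \<Omega> * Lip \<Omega> \<phi> * sup_norm \<Omega> (\<lambda>x. A x - B x)"
        unfolding D_def \<epsilon>_def by (simp add: ac_simps)
      finally show "\<bar>(\<integral>x. \<phi> x \<partial>\<mu>A) - (\<integral>x. \<phi> x \<partial>\<mu>B)\<bar>
              \<le> C / (1 - r) * diameter \<Omega> * Lip \<Omega> \<phi> * sup_norm \<Omega> (\<lambda>x. A x - B x)" .
    qed
  qed
qed



end
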